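(* Let $(X,\rho)$ be a separable metric space and let $T\colon X\to X$ be an aperiodic Borel automorphism. Then there exist a metrically universal Borel subset $\widehat X\subset X$ and a Borel measurable injective map $\Phi\colon \widehat X\to \mathcal{T}(\mathrm{UA})$ into the path space of the uniadic graph $\mathrm{UA}$ such that the adic shift $S$ is defined at every point of $\Phi(\widehat X)$ and $\Phi(Tx)=S(\Phi(x))$ for all $x\in\widehat X$.
   Context: A Borel automorphism of $X$ is an invertible map $T\colon X\to X$ such that $T$ and $T^{-1}$ are Borel measurable; it is aperiodic if it has no periodic points. $M_{\mathrm{ap}}(X,T)$ denotes the set of $T$-invariant aperiodic Borel probability measures on $X$ (i.e. invariant probability measures giving measure zero to the set of $T$-periodic points). A Borel set $\widehat X\subset X$ is metrically universal if $\mu(\widehat X)=1$ for every $\mu\in M_{\mathrm{ap}}(X,T)$. Graded graphs and adic shift: a graded graph has vertex set $\bigsqcup_{n\ge0}V_n$ with $V_0$ a single vertex, each $V_n$ finite, and (possibly multiple) edges only between $V_n$ and $V_{n+1}$; an adic structure is a linear order on the set of edges entering each vertex of level $n\ge1$ from level $n-1$. The path space $\mathcal{T}(\Gamma)$ is the set of infinite paths starting at the vertex of level $0$, going through one vertex of each level (a path is a sequence of edges $e_1,e_2,\dots$ with $e_n$ from level $n-1$ to level $n$), with the product Borel structure. Two paths are tail-equivalent if they coincide from some level on; on a tail-equivalence class the adic order is: for distinct paths $p,q$ coinciding after level $n$, with $n$ the largest level where they differ, $p<q$ iff the edge of $p$ entering its vertex at level $n$ is smaller than that of $q$ (they enter the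 same vertex, recursively compared; equivalently, compare lexicographically from the top differing level). The adic shift $S$ maps a path to its immediate successor in the adic order, defined on paths that are not maximal. The uniadic graph $\mathrm{UA}$: $V_0$ is a single vertex; given $V_n$, set $V_{n+1}=V_n^2\sqcup \mathrm{copy}(V_n)$. Each $w=(u,v)\in V_n^2$ receives two edges, from $u$ and from $v$, with the edge from $v$ declared greater than the edge from $u$; each $w\in\mathrm{copy}(V_n)$, a copy of $u\in V_n$, receives a single edge from $u$. *)

theory Defs
  imports "HOL-Analysis.Analysis" "HOL-Probability.Probability"
begin

definition borel_automorphism :: "('a::topological_space \<Rightarrow> 'a) \<Rightarrow> bool" where
  "borel_automorphism T \<longleftrightarrow> bij T \<and> T \<in> borel_measurable borel \<and> inv T \<in> borel_measurable borel"

definition periodic_points :: "('a \<Rightarrow> 'a) \<Rightarrow> 'a set" where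
  "periodic_points T = {x. \<exists>n>0. (T ^^ n) x = x}"

definition aperiodic :: "('a \<Rightarrow> 'a) \<Rightarrow> bool" where
  "aperiodic T \<longleftrightarrow> periodic_points T = {}"

definition M_ap :: "('a::topological_space \<Rightarrow> 'a) \<Rightarrow> 'a measure set" where
  "M_ap T = {M. sets M = sets borel \<and> prob_space M
               \<and> (\<forall>A\<in>sets borel. emeasure M (T -` A) = emeasure M A)
               \<and> emeasure M (periodic_points T) = 0}"

definition metrically_universal :: "('a::topological_space \<Rightarrow> 'a) \<Rightarrow> 'a set \<Rightarrow> bool" where
  "metrically_universal T Y \<longleftrightarrow> Y \<in> sets borel \<and> (\<forall>M\<in>M_ap T. emeasure M Y = 1)"

text \<open>Vertices: Root (level 0); Pair u v is the vertex (u,v) of V_n^2 at level n+1;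
  Cp u is the copy of u at level n+1.\<close>
datatype uavert = Root | Pair uavert uavert | Cp uavert

fun UA_level :: "nat \<Rightarrow> uavert set" where
  "UA_level 0 = {Root}"
| "UA_level (Suc n) = {Pair u v | u v. u \<in> UA_level n \<and> v \<in> UA_level n} \<union> {Cp u | u. u \<in> UA_level n}"

text \<open>An edge is identified by its target vertex and a label among the edges entering it:
  into Pair u v, label False is the edge from u and label True the (greater) edge from v;
  into Cp u, the single edge (label False) comes from u.  The adic order on edges entering
  a vertex is the order on labels (False < True).\<close>
type_synonym uaedge = "uavert \<times> bool"

fun valid_label :: "uavert \<Rightarrow> bool \<Rightarrow> bool" where
  "valid_label (Pair u v) l = True"
| "valid_label (Cp u) l = (\<not> l)"
| "valid_label Root l = False"

fun edge_src :: "uaedge \<Rightarrow> uavert" where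
  "edge_src (Pair u v, l) = (if l then v else u)"
| "edge_src (Cp u, l) = u"
| "edge_src (Root, l) = Root"

text \<open>Paths: p k is the edge from level k to level k+1.\<close>
definition UA_paths :: "(nat \<Rightarrow> uaedge) set" where
  "UA_paths = {p. (\<forall>k. fst (p k) \<in> UA_level (Suc k) \<and> valid_label (fst (p k)) (snd (p k))
                      \<and> edge_src (p (Suc k)) = fst (p k))
                 \<and> edge_src (p 0) = Root}"

definition UA_path_space :: "(nat \<Rightarrow> uaedge) measure" where
  "UA_path_space = restrict_space (PiM UNIV (\<lambda>_. count_space UNIV)) UA_paths"

definition adic_less :: "(nat \<Rightarrow> uaedge) \<Rightarrow> (nat \<Rightarrow> uaedge) \<Rightarrow> bool" where
  "adic_less p q \<longleftrightarrow> (\<exists>j. p j \<noteq> q j \<and> (\<forall>k>j. p k = q k) \<and> snd (p j) < snd (q j))"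

definition adic_dom :: "(nat \<Rightarrow> uaedge) set" where
  "adic_dom = {p \<in> UA_paths. \<exists>q\<in>UA_paths. adic_less p q}"

definition adic_shift :: "(nat \<Rightarrow> uaedge) \<Rightarrow> (nat \<Rightarrow> uaedge)" where
  "adic_shift p = (THE q. q \<in> UA_paths \<and> adic_less p q
                      \<and> \<not> (\<exists>r\<in>UA_paths. adic_less p r \<and> adic_less r q))"

end

theory Submission
  imports Defs "HOL-Library.Nat_Bijection" "HOL-Library.Countable"
begin

locale cons =
  fixes T :: "'a::topological_space \<Rightarrow> 'a" and U :: "nat \<Rightarrow> 'a set"
  assumes bijT: "bij T"
    and measT: "T \<in> borel_measurable borel"
    and measI: "inv T \<in> borel_measurable borel"
    and aper: "\<And>x n. n > 0 \<Longrightarrow> (T ^^ n) x \<noteq> x"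
    and Ub: "\<And>k. U k \<in> sets borel"
    and Usep: "\<And>x y. x \<noteq> y \<Longrightarrow> \<exists>k. x \<in> U k \<and> y \<notin> U k"
begin

definition Tz :: "int \<Rightarrow> 'a \<Rightarrow> 'a" where
  "Tz j = (if 0 \<le> j then T ^^ nat j else inv T ^^ nat (- j))"

lemma TinvT: "T (inv T x) = x" using bijT by (simp add: bij_def surj_f_inv_f)
lemma invTT: "inv T (T x) = x" using bijT by (simp add: bij_def inv_f_f)

lemma Tz0[simp]: "Tz 0 x = x" by (simp add: Tz_def)

lemma Tz_succ: "Tz (j + 1) x = T (Tz j x)"
proof (cases "0 \<le> j")
  case True
  then have "nat (j+1) = Suc (nat j)" by simp
  then show ?thesis using True by (simp add: Tz_def)
next
  case False
  show ?thesis
  proof (cases "j = -1")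
    case True then show ?thesis by (simp add: Tz_def TinvT)
  next
    case False2: False
    with False have "nat (-j) = Suc (nat (- (j+1)))" "\<not> 0 \<le> j+1" by auto
    then show ?thesis using False by (simp add: Tz_def TinvT)
  qed
qed

lemma Tz_pred: "Tz (j - 1) x = inv T (Tz j x)"
  using Tz_succ[of "j - 1" x] by (simp add: invTT)

lemma Tz_add: "Tz i (Tz j x) = Tz (i + j) x"
proof (induction i rule: int_induct[where k=0])
  case base then show ?case by simp
next
  case (step1 i) then show ?case using Tz_succ
    by (metis add.commute add.left_commute)
next
  case (step2 i)
  then show ?case using Tz_pred by (metis add.commute diff_add_eq)
qed

lemma Tz_nat: "Tz (int n) = T ^^ n" by (simp add: Tz_def)
lemma Tz1: "Tz 1 = T" using Tz_nat[of 1] by simp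

lemma Tz_inj: assumes "Tz i x = Tz j x" shows "i = j"
proof (rule ccontr)
  assume "i \<noteq> j"
  then consider "i < j" | "j < i" by linarith
  then show False
  proof cases
    case 1
    have "Tz (j - i) (Tz i x) = Tz i x" using assms Tz_add[of "j-i" i x] by simp
    then have "(T ^^ nat (j - i)) (Tz i x) = Tz i x" using 1 by (simp add: Tz_def)
    then show False using aper[of "nat (j-i)"] 1 by simp
  next
    case 2
    have "Tz (i - j) (Tz j x) = Tz j x" using assms Tz_add[of "i-j" j x] by simp
    then have "(T ^^ nat (i - j)) (Tz j x) = Tz j x" using 2 by (simp add: Tz_def)
    then show False using aper[of "nat (i-j)"] 2 by simp
  qed
qed

lemma funpow_meas: "f \<in> borel_measurable borel \<Longrightarrow> (f ^^ n) \<in> borel_measurable (borel::'a measure)"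
  for f :: "'a \<Rightarrow> 'a"
  by (induction n) (auto intro: measurable_compose)

lemma Tz_meas[measurable]: "Tz j \<in> borel_measurable borel"
  unfolding Tz_def using funpow_meas[OF measT] funpow_meas[OF measI] by auto

lemma Tz_vimage_sets[measurable]: "W \<in> sets borel \<Longrightarrow> Tz j -` W \<in> sets borel"
  using measurable_sets[OF Tz_meas, of W j] by simp

end

context cons begin

lemma Map_space: "M \<in> M_ap T \<Longrightarrow> space M = UNIV"
  unfolding M_ap_def using sets_eq_imp_space_eq[of M borel] by auto

lemma Map_sets: "M \<in> M_ap T \<Longrightarrow> sets M = sets borel"
  unfolding M_ap_def by auto

lemma Map_prob: "M \<in> M_ap T \<Longrightarrow> prob_space M"
  unfolding M_ap_def by auto

lemma Map_inv_nat: assumes "M \<in> M_ap T" "W \<in> sets borel"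
  shows "emeasure M ((T ^^ n) -` W) = emeasure M W"
  using assms(2)
proof (induction n arbitrary: W)
  case 0 then show ?case by simp
next
  case (Suc n)
  have "(T ^^ Suc n) -` W = (T ^^ n) -` (T -` W)" by auto
  moreover have "T -` W \<in> sets borel" using measurable_sets[OF measT Suc.prems] by simp
  ultimately have "emeasure M ((T ^^ Suc n) -` W) = emeasure M (T -` W)" using Suc.IH by simp
  also have "\<dots> = emeasure M W" using assms(1) Suc.prems unfolding M_ap_def by auto
  finally show ?case .
qed

lemma Map_inv: assumes "M \<in> M_ap T" "W \<in> sets borel"
  shows "emeasure M (Tz j -` W) = emeasure M W"
proof (cases "0 \<le> j")
  case True
  then have "Tz j = T ^^ nat j" by (simp add: Tz_def)
  then show ?thesis using Map_inv_nat[OF assms] by simp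
next
  case False
  define V where "V = Tz j -` W"
  have V: "V \<in> sets borel" unfolding V_def using assms(2) by measurable
  have "Tz (-j) -` V = W" unfolding V_def by (auto simp: Tz_add)
  moreover have "Tz (-j) = T ^^ nat (-j)" using False by (simp add: Tz_def)
  ultimately have "emeasure M W = emeasure M V" using Map_inv_nat[OF assms(1) V, of "nat (-j)"] by metis
  then show ?thesis unfolding V_def by simp
qed

lemma null_once:
  assumes M: "M \<in> M_ap T" and W: "W \<in> sets borel"
    and once: "\<And>x n. x \<in> W \<Longrightarrow> 0 < n \<Longrightarrow> Tz (int n) x \<notin> W"
  shows "emeasure M W = 0"
proof -
  interpret prob_space M using Map_prob[OF M] .
  have sM: "sets M = sets borel" using Map_sets[OF M] .
  define D where "D n = Tz (int n) -` W" for n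
  have Ds: "D n \<in> sets M" for n unfolding D_def sM using W by measurable
  have disj: "disjoint_family D"
    unfolding disjoint_family_on_def
  proof (intro ballI impI)
    fix m n :: nat assume "m \<noteq> n"
    show "D m \<inter> D n = {}"
    proof (rule ccontr)
      assume "D m \<inter> D n \<noteq> {}"
      then obtain x where x: "Tz (int m) x \<in> W" "Tz (int n) x \<in> W" unfolding D_def by auto
      show False
      proof (cases "m < n")
        case True
        have "Tz (int (n - m)) (Tz (int m) x) = Tz (int n) x" using True by (simp add: Tz_add)
        then show False using once[OF x(1), of "n - m"] x(2) True by simp
      next
        case False
        then have "n < m" using \<open>m \<noteq> n\<close> by simp
        have "Tz (int (m - n)) (Tz (int n) x) = Tz (int m) x" using \<open>n < m\<close> by (simp add: Tz_add)
        then show False using once[OF x(2), of "m - n"] x(1) \<open>n < m\<close> by simp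
      qed
    qed
  qed
  have mD: "measure M (D n) = measure M W" for n
    using Map_inv[OF M W, of "int n"] unfolding D_def measure_def by simp
  have bound: "real N * measure M W \<le> 1" for N
  proof -
    have "measure M (\<Union>n\<in>{..<N}. D n) = (\<Sum>n\<in>{..<N}. measure M (D n))"
      by (rule measure_finite_Union) (use Ds disj in \<open>auto simp: disjoint_family_on_def\<close>)
    also have "\<dots> = real N * measure M W" using mD by simp
    finally show ?thesis using prob_le_1 by metis
  qed
  have "measure M W = 0"
  proof (rule ccontr)
    assume "measure M W \<noteq> 0"
    then have p: "measure M W > 0" using measure_nonneg[of M W] by linarith
    obtain N :: nat where "real N > 1 / measure M W" using reals_Archimedean2 by blast
    then have "real N * measure M W > 1" using p by (simp add: field_simps)
    then show False using bound[of N] by simp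
  qed
  then show ?thesis using emeasure_eq_measure by simp
qed

end

context cons begin

definition kk :: "nat \<Rightarrow> nat" where "kk g = fst (prod_decode g)"

definition Qs :: "nat \<Rightarrow> 'a set \<Rightarrow> 'a set" where
  "Qs g S = {c \<in> S. c \<notin> U (kk g) \<and> (\<exists>i::nat. 0 < i \<and> Tz (- int i) c \<in> S \<and> Tz (- int i) c \<in> U (kk g)
       \<and> (\<forall>i'. 0 < i' \<and> i' < i \<longrightarrow> Tz (- int i') c \<notin> S))}"

fun A :: "nat \<Rightarrow> 'a set" where
  "A 0 = UNIV"
| "A (Suc g) = A g - Qs g (A g)"

definition Q :: "nat \<Rightarrow> 'a set" where "Q g = Qs g (A g)"

declare A.simps(2)[simp del]
lemma A_Suc[simp]: "A (Suc g) = A g - Q g" by (simp add: Q_def A.simps)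
lemma Q_sub: "Q g \<subseteq> A g" by (auto simp: Q_def Qs_def)

definition Ix :: "nat \<Rightarrow> (nat \<times> int) set" where
  "Ix g = {..g} \<times> {- (2 ^ g) .. 2 ^ g}"

definition idx :: "nat \<times> int \<Rightarrow> nat" where "idx p = prod_encode (fst p, int_encode (snd p))"

lemma idx_inj: "idx p = idx q \<Longrightarrow> p = q"
  unfolding idx_def by (cases p; cases q) (auto simp: int_encode_eq)
lemma inj_idx: "inj idx" using idx_inj by (auto intro: injI)

lemma Ix_fin: "finite (Ix g)" unfolding Ix_def by auto

definition bits :: "nat \<Rightarrow> 'a \<Rightarrow> nat set" where
  "bits g c = idx ` {p \<in> Ix g. Tz (snd p) c \<in> U (fst p)}"

definition code :: "nat \<Rightarrow> 'a \<Rightarrow> nat" where "code g c = set_encode (bits g c)"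

definition K :: "nat \<Rightarrow> nat" where "K g = Suc (Max (idx ` Ix g))"
definition N :: "nat \<Rightarrow> nat" where "N g = 2 ^ K g"

lemma N_pos: "0 < N g" by (simp add: N_def)

lemma sum_pow2: "(\<Sum>i<k. 2 ^ i :: nat) = 2 ^ k - 1"
  by (induction k) auto

lemma set_encode_bound: assumes "B \<subseteq> {..<k}" shows "set_encode B < 2 ^ k"
proof -
  have "set_encode B = (\<Sum>i\<in>B. 2 ^ i)" by (simp add: set_encode_def)
  also have "\<dots> \<le> (\<Sum>i<k. 2 ^ i)" by (rule sum_mono2) (use assms in auto)
  also have "\<dots> < 2 ^ k" using sum_pow2[of k] by simp
  finally show ?thesis .
qed

lemma bits_fin: "finite (bits g c)" unfolding bits_def using Ix_fin by auto

lemma code_lt: "code g c < N g"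
proof -
  have "bits g c \<subseteq> {..<K g}"
  proof
    fix z assume "z \<in> bits g c"
    then obtain p where "p \<in> Ix g" "z = idx p" unfolding bits_def by auto
    then have "z \<le> Max (idx ` Ix g)" using Ix_fin by auto
    then show "z \<in> {..<K g}" unfolding K_def by auto
  qed
  then show ?thesis unfolding code_def N_def by (rule set_encode_bound)
qed

lemma code_eq_bits: assumes "code g c = code g c'" "p \<in> Ix g"
  shows "(Tz (snd p) c \<in> U (fst p)) = (Tz (snd p) c' \<in> U (fst p))"
proof -
  have "bits g c = bits g c'" using assms(1) bits_fin unfolding code_def by (simp add: set_encode_eq)
  then have "(idx p \<in> bits g c) = (idx p \<in> bits g c')" by simp
  moreover have "(idx p \<in> bits g d) = (Tz (snd p) d \<in> U (fst p))" for d
    unfolding bits_def using assms(2) inj_image_mem_iff[OF inj_idx] by simp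
  ultimately show ?thesis by simp
qed

fun lvl :: "nat \<Rightarrow> nat \<times> nat" where
  "lvl 0 = (0, 0)"
| "lvl (Suc n) = (let (g, t) = lvl n in if Suc t < N g then (g, Suc t) else (Suc g, 0))"

definition L :: "nat \<Rightarrow> 'a set" where
  "L n = (case lvl n of (g, t) \<Rightarrow> A g - {c \<in> Q g. code g c < t})"

definition S :: "nat \<Rightarrow> 'a set" where "S n = L n - L (Suc n)"

lemma lvl_lt: "lvl n = (g, t) \<Longrightarrow> t < N g"
proof (induction n arbitrary: g t)
  case 0 then show ?case using N_pos by auto
next
  case (Suc n)
  obtain g' t' where "lvl n = (g', t')" by fastforce
  then show ?case using Suc N_pos by (auto split: if_splits)
qed

lemma L0: "L 0 = UNIV" by (simp add: L_def)

lemma L_eq: "lvl n = (g, t) \<Longrightarrow> L n = A g - {c \<in> Q g. code g c < t}"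
  by (simp add: L_def)

lemma L_Suc_eq: assumes "lvl n = (g, t)" shows "L (Suc n) = A g - {c \<in> Q g. code g c \<le> t}"
proof (cases "Suc t < N g")
  case True
  then have "lvl (Suc n) = (g, Suc t)" using assms by simp
  then show ?thesis by (simp add: L_def less_Suc_eq_le)
next
  case False
  then have "lvl (Suc n) = (Suc g, 0)" using assms by simp
  then have "L (Suc n) = A g - Q g" by (simp add: L_def A_Suc)
  moreover have "{c \<in> Q g. code g c \<le> t} = Q g" using code_lt[of g] False
  proof -
    have "code g c \<le> t" if "c \<in> Q g" for c using code_lt[of g c] False by linarith
    then show ?thesis by auto
  qed
  ultimately show ?thesis by simp
qed

lemma S_eq: assumes "lvl n = (g, t)" shows "S n = {c \<in> Q g. code g c = t}"
  unfolding S_def L_Suc_eq[OF assms] L_eq[OF assms] using Q_sub by auto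

lemma L_sub_A: "lvl n = (g, t) \<Longrightarrow> L n \<subseteq> A g" by (auto simp: L_eq)
lemma A_sub_L: "lvl n = (g, t) \<Longrightarrow> A (Suc g) \<subseteq> L n" by (auto simp: L_eq A_Suc)
lemma L_Suc_sub: "L (Suc n) \<subseteq> L n"
proof -
  obtain g t where "lvl n = (g, t)" by fastforce
  then show ?thesis using L_Suc_eq L_eq by auto
qed
lemma L_mono: "n \<le> m \<Longrightarrow> L m \<subseteq> L n"
  by (induction m rule: dec_induct) (use L_Suc_sub in auto)
lemma A_Suc_sub: "A (Suc g) \<subseteq> A g" by auto
lemma A_mono: "g \<le> h \<Longrightarrow> A h \<subseteq> A g"
  by (induction h rule: dec_induct) (use A_Suc_sub in auto)

lemma lvl_start: "\<exists>n. lvl n = (g, 0)"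
proof (induction g)
  case 0 then show ?case by (rule exI[of _ 0]) simp
next
  case (Suc g)
  then obtain n where n: "lvl n = (g, 0)" by blast
  have "\<forall>t < N g. lvl (n + t) = (g, t)"
  proof (intro allI impI)
    fix t assume "t < N g" then show "lvl (n + t) = (g, t)"
      by (induction t) (auto simp: n)
  qed
  then have "lvl (n + (N g - 1)) = (g, N g - 1)" using N_pos by (meson diff_less zero_less_one)
  then have "lvl (Suc (n + (N g - 1))) = (Suc g, 0)" using N_pos by simp
  then show ?case by blast
qed

lemma L_start: "lvl n = (g, 0) \<Longrightarrow> L n = A g" by (simp add: L_eq)

end

context cons begin

lemma Qs_meas: assumes "W \<in> sets borel" shows "Qs g W \<in> sets borel"
proof -
  have "Qs g W = W \<inter> (- U (kk g)) \<inter> (\<Union>i\<in>{0<..}. Tz (- int i) -` (W \<inter> U (kk g)) \<inter>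
      (\<Inter>i'\<in>{0<..<i}. Tz (- int i') -` (- W)))"
    unfolding Qs_def by auto
  also have "\<dots> \<in> sets borel" using assms Ub by measurable
  finally show ?thesis .
qed

lemma A_meas[measurable]: "A g \<in> sets borel"
  by (induction g) (auto simp: Q_def intro: Qs_meas)

lemma Q_meas[measurable]: "Q g \<in> sets borel"
  unfolding Q_def by (rule Qs_meas) simp

lemma filter_meas: assumes "finite F" "\<And>z. {x. P z x} \<in> sets borel"
  shows "(\<lambda>x. {z\<in>F. P z x}) \<in> measurable borel (count_space (Pow F))"
proof -
  have "countable (Pow F)" using assms(1) by (simp add: countable_finite)
  moreover have "(\<lambda>x. {z\<in>F. P z x}) -` {B} \<in> sets borel" if "B \<in> Pow F" for B
  proof -
    have "(\<lambda>x. {z\<in>F. P z x}) -` {B} = (\<Inter>z\<in>F. (if z \<in> B then {x. P z x} else UNIV - {x. P z x}))"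
    proof (rule set_eqI)
      fix x
      have "({z\<in>F. P z x} = B) \<longleftrightarrow> (\<forall>z\<in>F. (z\<in>B) = P z x)" using that by blast
      moreover have "(x \<in> (\<Inter>z\<in>F. (if z \<in> B then {x. P z x} else UNIV - {x. P z x}))) \<longleftrightarrow> (\<forall>z\<in>F. (z\<in>B) = P z x)"
        unfolding INT_iff by (intro ball_cong refl) auto
      ultimately show "x \<in> (\<lambda>x. {z\<in>F. P z x}) -` {B} \<longleftrightarrow> x \<in> (\<Inter>z\<in>F. (if z \<in> B then {x. P z x} else UNIV - {x. P z x}))"
        by simp
    qed
    also have "\<dots> \<in> sets borel"
    proof (cases "F = {}")
      case True then show ?thesis by simp
    next
      case False
      show ?thesis
      proof (rule sets.finite_INT[OF assms(1) False])
        fix z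
        show "(if z \<in> B then {x. P z x} else UNIV - {x. P z x}) \<in> sets borel"
          using assms(2)[of z] by (cases "z \<in> B") auto
      qed
    qed
    finally show ?thesis .
  qed
  ultimately show ?thesis
    unfolding measurable_count_space_eq2[OF finite_Pow_iff[THEN iffD2, OF assms(1)]] by auto
qed

lemma code_meas[measurable]: "code g \<in> measurable borel (count_space UNIV)"
proof -
  have "(\<lambda>c. {p \<in> Ix g. Tz (snd p) c \<in> U (fst p)}) \<in> measurable borel (count_space (Pow (Ix g)))"
    by (rule filter_meas[OF Ix_fin]) (use Ub in measurable)
  moreover have "(\<lambda>B. set_encode (idx ` B)) \<in> measurable (count_space (Pow (Ix g))) (count_space UNIV)"
    by simp
  ultimately have "(\<lambda>c. set_encode (idx ` {p \<in> Ix g. Tz (snd p) c \<in> U (fst p)})) \<in> measurable borel (count_space UNIV)"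
    by (rule measurable_compose)
  moreover have "code g = (\<lambda>c. set_encode (idx ` {p \<in> Ix g. Tz (snd p) c \<in> U (fst p)}))"
    by (rule ext) (simp add: code_def bits_def)
  ultimately show ?thesis by (simp only:)
qed

lemma L_meas[measurable]: "L n \<in> sets borel"
proof -
  obtain g t where gt: "lvl n = (g, t)" by fastforce
  have "L n = A g - (Q g \<inter> code g -` {..<t})" using L_eq[OF gt] by auto
  also have "\<dots> \<in> sets borel"
  proof -
    have "code g -` {..<t} \<in> sets borel" using measurable_sets[OF code_meas, of "{..<t}" g] by simp
    then show ?thesis by auto
  qed
  finally show ?thesis .
qed

lemma S_meas[measurable]: "S n \<in> sets borel" unfolding S_def by measurable

end

context cons begin

lemma least_pos: assumes "\<exists>i::nat. 0 < i \<and> P i"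
  shows "\<exists>d. 0 < d \<and> P d \<and> (\<forall>d'. 0 < d' \<and> d' < d \<longrightarrow> \<not> P d')"
proof -
  from assms have "\<exists>i. (0 < i \<and> P i)" .
  then obtain d where "0 < d \<and> P d" "\<forall>m<d. \<not> (0 < m \<and> P m)"
    using exists_least_iff[of "\<lambda>i. 0 < i \<and> P i"] by blast
  then show ?thesis by blast
qed

lemma least_nat: assumes "\<exists>i::nat. P i"
  shows "\<exists>d. P d \<and> (\<forall>d'. d' < d \<longrightarrow> \<not> P d')"
  using assms exists_least_iff[of P] by blast

lemma Tz_nn: "Tz (- int i) (Tz (int i) x) = x" "Tz (int i) (Tz (- int i) x) = x"
  by (simp_all add: Tz_add)

lemma Q_prev: assumes "c \<in> Q g"
  shows "c \<in> A g" "c \<notin> U (kk g)"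
    "\<exists>i. 0 < i \<and> Tz (- int i) c \<in> A g \<and> Tz (- int i) c \<in> U (kk g) \<and> (\<forall>i'. 0 < i' \<and> i' < i \<longrightarrow> Tz (- int i') c \<notin> A g)"
  using assms unfolding Q_def Qs_def by auto

lemma Q_no_two:
  assumes c: "c \<in> Q g" and d: "0 < d" "Tz (int d) c \<in> A g"
    and gap: "\<forall>d'. 0 < d' \<and> d' < d \<longrightarrow> Tz (int d') c \<notin> A g"
  shows "Tz (int d) c \<notin> Q g"
proof
  assume "Tz (int d) c \<in> Q g"
  from Q_prev(3)[OF this] obtain i where i: "0 < i" "Tz (- int i) (Tz (int d) c) \<in> A g"
    "Tz (- int i) (Tz (int d) c) \<in> U (kk g)"
    "\<forall>i'. 0 < i' \<and> i' < i \<longrightarrow> Tz (- int i') (Tz (int d) c) \<notin> A g" by blast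
  have cA: "c \<in> A g" using Q_prev(1)[OF c] .
  have "Tz (- int d) (Tz (int d) c) = c" by (simp add: Tz_add)
  then have "\<not> d < i" using i(4) cA d(1) by (metis (no_types, lifting))
  moreover have "\<not> i < d"
  proof
    assume "i < d"
    have "Tz (- int i) (Tz (int d) c) = Tz (int (d - i)) c" using \<open>i < d\<close> by (simp add: Tz_add)
    moreover have "0 < d - i" "d - i < d" using \<open>i < d\<close> i(1) by auto
    ultimately show False using gap i(2) by metis
  qed
  ultimately have "i = d" by simp
  then show False using i(3) Q_prev(2)[OF c] by (simp add: Tz_add)
qed

lemma L_cases: "lvl n = (g, t) \<Longrightarrow> x \<in> A g \<Longrightarrow> x \<notin> Q g \<Longrightarrow> x \<in> L (Suc n)"
  by (simp add: L_Suc_eq)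

lemma S_sub_Q: "lvl n = (g, t) \<Longrightarrow> S n \<subseteq> Q g" using S_eq by auto

lemma S_no_two:
  assumes c: "c \<in> S n" and d: "0 < d" "Tz (int d) c \<in> L n"
    and gap: "\<forall>d'. 0 < d' \<and> d' < d \<longrightarrow> Tz (int d') c \<notin> L n"
  shows "Tz (int d) c \<notin> S n"
proof
  assume dS: "Tz (int d) c \<in> S n"
  obtain g t where gt: "lvl n = (g, t)" by fastforce
  have cQ: "c \<in> Q g" using c S_sub_Q[OF gt] by auto
  have "\<exists>i. 0 < i \<and> Tz (int i) c \<in> A g" using d L_sub_A[OF gt] by auto
  from least_pos[OF this] obtain d1 where d1: "0 < d1" "Tz (int d1) c \<in> A g"
    "\<forall>d'. 0 < d' \<and> d' < d1 \<longrightarrow> Tz (int d') c \<notin> A g" by blast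
  have "d1 \<le> d" using d1(3) d L_sub_A[OF gt] by (meson not_le subsetD)
  have nq: "Tz (int d1) c \<notin> Q g" using Q_no_two[OF cQ d1] .
  show False
  proof (cases "d1 = d")
    case True
    then show False using nq dS S_sub_Q[OF gt] by auto
  next
    case False
    then have "d1 < d" using \<open>d1 \<le> d\<close> by simp
    have "Tz (int d1) c \<in> L (Suc n)" using L_cases[OF gt d1(2) nq] .
    then have "Tz (int d1) c \<in> L n" using L_Suc_sub by auto
    then show False using gap d1(1) \<open>d1 < d\<close> by auto
  qed
qed

lemma S_prev: assumes c: "c \<in> S n"
  shows "\<exists>i. 0 < i \<and> Tz (- int i) c \<in> L (Suc n) \<and> (\<forall>i'. 0 < i' \<and> i' < i \<longrightarrow> Tz (- int i') c \<notin> L n)"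
proof -
  obtain g t where gt: "lvl n = (g, t)" by fastforce
  have cQ: "c \<in> Q g" using c S_sub_Q[OF gt] by auto
  from Q_prev(3)[OF cQ] obtain i where i: "0 < i" "Tz (- int i) c \<in> A g" "Tz (- int i) c \<in> U (kk g)"
    "\<forall>i'. 0 < i' \<and> i' < i \<longrightarrow> Tz (- int i') c \<notin> A g" by blast
  have "Tz (- int i) c \<notin> Q g" using i(3) Q_prev(2) by blast
  then have "Tz (- int i) c \<in> L (Suc n)" using L_cases[OF gt i(2)] by simp
  moreover have "\<forall>i'. 0 < i' \<and> i' < i \<longrightarrow> Tz (- int i') c \<notin> L n" using i(4) L_sub_A[OF gt] by auto
  ultimately show ?thesis using i(1) by blast
qed

lemma S_in: "c \<in> S n \<Longrightarrow> c \<in> L n" "c \<in> S n \<Longrightarrow> c \<notin> L (Suc n)" by (auto simp: S_def)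

lemma gapA: assumes "a \<in> A g" "0 < d" "Tz (int d) a \<in> A g" "\<forall>d'. 0 < d' \<and> d' < d \<longrightarrow> Tz (int d') a \<notin> A g"
  shows "d \<le> 2 ^ g"
  using assms
proof (induction g arbitrary: a d)
  case 0
  have "\<not> 1 < d" using 0(4) by auto
  then show ?case using 0(2) by simp
next
  case (Suc g)
  have aA: "a \<in> A g" "Tz (int d) a \<in> A g" using Suc.prems A_Suc_sub by auto
  have "\<exists>i. 0 < i \<and> Tz (int i) a \<in> A g" using aA Suc.prems(2) by auto
  from least_pos[OF this] obtain d1 where d1: "0 < d1" "Tz (int d1) a \<in> A g"
    "\<forall>d'. 0 < d' \<and> d' < d1 \<longrightarrow> Tz (int d') a \<notin> A g" by blast
  have "d1 \<le> d" using d1(3) aA Suc.prems(2) by (meson not_le)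
  have h1: "d1 \<le> 2 ^ g" using Suc.IH[OF aA(1) d1] .
  show ?case
  proof (cases "d1 = d")
    case True then show ?thesis using h1 by simp
  next
    case False
    then have "d1 < d" using \<open>d1 \<le> d\<close> by simp
    have c1Q: "Tz (int d1) a \<in> Q g"
      using Suc.prems(4) \<open>d1 < d\<close> d1(1,2) by auto
    define c1 where "c1 = Tz (int d1) a"
    have "Tz (int (d - d1)) c1 = Tz (int d) a" unfolding c1_def using \<open>d1 < d\<close> by (simp add: Tz_add)
    then have "\<exists>i. 0 < i \<and> Tz (int i) c1 \<in> A g" using aA \<open>d1 < d\<close> by (metis zero_less_diff)
    from least_pos[OF this] obtain d2 where d2: "0 < d2" "Tz (int d2) c1 \<in> A g"
      "\<forall>d'. 0 < d' \<and> d' < d2 \<longrightarrow> Tz (int d') c1 \<notin> A g" by blast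
    have h2: "d2 \<le> 2 ^ g" using Suc.IH[OF _ d2] c1Q Q_sub unfolding c1_def by auto
    have c2: "Tz (int d2) c1 = Tz (int (d1 + d2)) a" unfolding c1_def by (simp add: Tz_add add.commute)
    have nq: "Tz (int d2) c1 \<notin> Q g" using Q_no_two[OF c1Q[folded c1_def] d2] .
    then have inS: "Tz (int (d1 + d2)) a \<in> A (Suc g)" using d2(2) c2 by simp
    have "\<not> d1 + d2 < d" using Suc.prems(4) inS d1(1) by auto
    moreover have "\<not> d < d1 + d2"
    proof
      assume "d < d1 + d2"
      then have "0 < d - d1" "d - d1 < d2" using \<open>d1 < d\<close> by auto
      moreover have "Tz (int (d - d1)) c1 = Tz (int d) a" unfolding c1_def using \<open>d1 < d\<close> by (simp add: Tz_add)
      ultimately show False using d2(3) aA by metis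
    qed
    ultimately have "d = d1 + d2" by simp
    then show ?thesis using h1 h2 by simp
  qed
qed

end

context cons begin

definition E :: "'a set" where "E = (\<Inter>g. A g)"
definition F :: "nat \<Rightarrow> 'a set" where "F g = {x \<in> A g. \<forall>i::nat. 0 < i \<longrightarrow> Tz (int i) x \<notin> A g}"
definition BB :: "nat \<Rightarrow> 'a set" where "BB n = (case n of 0 \<Rightarrow> E | Suc g \<Rightarrow> F g)"
definition Xh :: "'a set" where "Xh = {x. \<forall>j n. Tz j x \<notin> BB n}"

lemma E_meas[measurable]: "E \<in> sets borel" unfolding E_def by measurable
lemma F_meas[measurable]: "F g \<in> sets borel"
proof -
  have "F g = A g \<inter> (\<Inter>i\<in>{0<..}. Tz (int i) -` (UNIV - A g))" unfolding F_def by auto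
  also have "\<dots> \<in> sets borel" by measurable
  finally show ?thesis .
qed
lemma BB_meas[measurable]: "BB n \<in> sets borel" unfolding BB_def by (cases n) auto

lemma Xh_meas[measurable]: "Xh \<in> sets borel"
proof -
  have "Xh = (\<Inter>j. \<Inter>n. UNIV - Tz j -` BB n)" unfolding Xh_def by auto
  also have "\<dots> \<in> sets borel" by measurable
  finally show ?thesis .
qed

lemma Xh_shift: "x \<in> Xh \<Longrightarrow> Tz m x \<in> Xh"
  unfolding Xh_def by (auto simp: Tz_add)

lemma Xh_T: "x \<in> Xh \<Longrightarrow> T x \<in> Xh" using Xh_shift[of x 1] by (simp add: Tz1)

lemma Xh_notE: assumes "x \<in> Xh" shows "x \<notin> E"
proof -
  have "Tz 0 x \<notin> BB 0" using assms unfolding Xh_def by blast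
  then show ?thesis unfolding BB_def by simp
qed
lemma Xh_notF: assumes "x \<in> Xh" shows "x \<notin> F g"
proof -
  have "Tz 0 x \<notin> BB (Suc g)" using assms unfolding Xh_def by blast
  then show ?thesis unfolding BB_def by simp
qed

lemma up_A: "x \<in> Xh \<Longrightarrow> \<exists>i. 0 < i \<and> Tz (int i) x \<in> A g"
proof (induction g arbitrary: x)
  case 0 then show ?case by (intro exI[of _ 1]) simp
next
  case (Suc g)
  from Suc.IH[OF Suc.prems] obtain i where i: "0 < i" "Tz (int i) x \<in> A g" by blast
  define y where "y = Tz (int i) x"
  show ?case
  proof (cases "y \<in> Q g")
    case False then show ?thesis using i y_def by auto
  next
    case True
    have "y \<in> Xh" unfolding y_def using Suc.prems by (rule Xh_shift)
    then have "y \<notin> F g" by (rule Xh_notF)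
    then have "\<exists>j. 0 < j \<and> Tz (int j) y \<in> A g" using i(2) unfolding F_def y_def by auto
    from least_pos[OF this] obtain d where d: "0 < d" "Tz (int d) y \<in> A g"
      "\<forall>d'. 0 < d' \<and> d' < d \<longrightarrow> Tz (int d') y \<notin> A g" by blast
    have "Tz (int d) y \<notin> Q g" using Q_no_two[OF True d] .
    then have "Tz (int (d + i)) x \<in> A (Suc g)" using d(2) unfolding y_def by (simp add: Tz_add)
    then show ?thesis using d(1) by (intro exI[of _ "d + i"]) simp
  qed
qed

lemma never_removed:
  assumes "a \<in> A g" "\<forall>i. 0 < i \<longrightarrow> Tz (- int i) a \<notin> A g"
  shows "a \<in> E"
proof -
  have "a \<in> A h" for h
  proof (cases "h \<le> g")
    case True then show ?thesis using A_mono assms(1) by blast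
  next
    case False
    then have "g \<le> h" by simp
    then show ?thesis
    proof (induction h rule: dec_induct)
      case base then show ?case using assms(1) .
    next
      case (step h)
      have "a \<notin> Q h"
      proof
        assume "a \<in> Q h"
        from Q_prev(3)[OF this] obtain i where "0 < i" "Tz (- int i) a \<in> A h" by blast
        then show False using assms(2) A_mono[OF step(1)] by blast
      qed
      then show ?case using step by simp
    qed
  qed
  then show ?thesis unfolding E_def by auto
qed

lemma dn_A: assumes x: "x \<in> Xh" shows "\<exists>i. 0 < i \<and> Tz (- int i) x \<in> A g"
proof (rule ccontr)
  assume no: "\<not> (\<exists>i. 0 < i \<and> Tz (- int i) x \<in> A g)"
  have "Tz (-1) x \<in> Xh" using x by (rule Xh_shift)
  from up_A[OF this] obtain i where i: "0 < i" "Tz (int i) (Tz (-1) x) \<in> A g" by blast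
  then have "Tz (int i) (Tz (-1) x) = Tz (int (i - 1)) x" by (simp add: Tz_add of_nat_diff)
  then have "\<exists>m. Tz (int m) x \<in> A g" using i(2) by metis
  from least_nat[OF this] obtain m where m: "Tz (int m) x \<in> A g" "\<forall>m'<m. Tz (int m') x \<notin> A g" by blast
  have "\<forall>i. 0 < i \<longrightarrow> Tz (- int i) (Tz (int m) x) \<notin> A g"
  proof (intro allI impI)
    fix i :: nat assume "0 < i"
    show "Tz (- int i) (Tz (int m) x) \<notin> A g"
    proof (cases "i \<le> m")
      case True
      then have "Tz (- int i) (Tz (int m) x) = Tz (int (m - i)) x" by (simp add: Tz_add)
      moreover have "m - i < m" using \<open>0 < i\<close> True by simp
      ultimately show ?thesis using m(2) by simp
    next
      case False
      then have "Tz (- int i) (Tz (int m) x) = Tz (- int (i - m)) x" by (simp add: Tz_add)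
      then show ?thesis using no False by (metis zero_less_diff not_le)
    qed
  qed
  then have "Tz (int m) x \<in> E" using never_removed m(1) by blast
  moreover have "Tz (int m) x \<in> Xh" using x by (rule Xh_shift)
  ultimately show False using Xh_notE by blast
qed

lemma rm_A: "x \<in> Xh \<Longrightarrow> \<exists>g. x \<notin> A g" using Xh_notE unfolding E_def by auto

lemma up_L: assumes "x \<in> Xh" shows "\<exists>i. 0 < i \<and> Tz (int i) x \<in> L n"
proof -
  obtain g t where gt: "lvl n = (g, t)" by fastforce
  from up_A[OF assms, of "Suc g"] obtain i where "0 < i" "Tz (int i) x \<in> A (Suc g)" by blast
  then show ?thesis using A_sub_L[OF gt] by (intro exI[of _ i]) auto
qed

lemma dn_L: assumes "x \<in> Xh" shows "\<exists>i. 0 < i \<and> Tz (- int i) x \<in> L n"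
proof -
  obtain g t where gt: "lvl n = (g, t)" by fastforce
  from dn_A[OF assms, of "Suc g"] obtain i where "0 < i" "Tz (- int i) x \<in> A (Suc g)" by blast
  then show ?thesis using A_sub_L[OF gt] by (intro exI[of _ i]) auto
qed

lemma rm_L: assumes "x \<in> Xh" shows "\<exists>n. x \<notin> L n"
proof -
  obtain g where g: "x \<notin> A g" using rm_A[OF assms] by blast
  obtain n where n: "lvl n = (g, 0)" using lvl_start by blast
  have "L n = A g" using n by (rule L_start)
  then have "x \<notin> L n" using g by simp
  then show ?thesis by (rule exI)
qed

lemma rm_L_ge: assumes "x \<in> Xh" shows "\<exists>n\<ge>m. x \<notin> L n"
proof -
  obtain n where "x \<notin> L n" using rm_L[OF assms] by blast
  then show ?thesis using L_mono[of n "max n m"] by (intro exI[of _ "max n m"]) auto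
qed

lemma F_once: "x \<in> F g \<Longrightarrow> 0 < m \<Longrightarrow> Tz (int m) x \<notin> F g"
  unfolding F_def by auto

lemma E_once: "0 < m \<Longrightarrow> x \<in> E \<Longrightarrow> Tz (int m) x \<notin> E"
proof (induction m arbitrary: x rule: less_induct)
  case (less m)
  show ?case
  proof
    assume mE: "Tz (int m) x \<in> E"
    show False
    proof (cases "\<exists>m'. 0 < m' \<and> m' < m \<and> Tz (int m') x \<in> E")
      case True
      then obtain m' where "0 < m'" "m' < m" "Tz (int m') x \<in> E" by blast
      then show False using less.IH[OF \<open>m' < m\<close> \<open>0 < m'\<close> less.prems(2)] by blast
    next
      case False
      then have "\<forall>i\<in>{0<..<m}. \<exists>g. Tz (int i) x \<notin> A g" unfolding E_def by auto
      from bchoice[OF this] obtain f where f: "\<forall>i\<in>{0<..<m}. Tz (int i) x \<notin> A (f i)" by blast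
      define G where "G = (\<Sum>i\<in>{0<..<m}. f i)"
      have fG: "\<forall>i\<in>{0<..<m}. Tz (int i) x \<notin> A G"
      proof
        fix i assume i: "i \<in> {0<..<m}"
        have "f i \<le> G" unfolding G_def using i by (intro member_le_sum) auto
        then show "Tz (int i) x \<notin> A G" using f i A_mono by blast
      qed
      have "x \<noteq> Tz (int m) x" using Tz_inj[of 0 x "int m"] less.prems(1) by auto
      then obtain k where k: "x \<in> U k" "Tz (int m) x \<notin> U k" using Usep by blast
      define g where "g = prod_encode (k, G)"
      have kg: "kk g = k" unfolding g_def kk_def by simp
      have Gg: "G \<le> g" unfolding g_def by (rule le_prod_encode_2)
      define c where "c = Tz (int m) x"
      have cA: "c \<in> A g" "x \<in> A g" using mE less.prems(2) unfolding c_def E_def by auto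
      have hback: "Tz (- int m) c = x" unfolding c_def by (simp add: Tz_add)
      have between: "\<forall>i'. 0 < i' \<and> i' < m \<longrightarrow> Tz (- int i') c \<notin> A g"
      proof (intro allI impI)
        fix i' assume i': "0 < i' \<and> i' < m"
        have eq: "Tz (- int i') c = Tz (int (m - i')) x" unfolding c_def using i' by (simp add: Tz_add)
        have "m - i' \<in> {0<..<m}" using i' by auto
        then have "Tz (int (m - i')) x \<notin> A G" using fG by blast
        then show "Tz (- int i') c \<notin> A g" using A_mono[OF Gg] unfolding eq by blast
      qed
      have c1: "c \<notin> U (kk g)" using k(2) kg c_def by simp
      have c2: "Tz (- int m) c \<in> A g \<and> Tz (- int m) c \<in> U (kk g)" using hback cA(2) k(1) kg by simp
      have "c \<in> Qs g (A g)" unfolding Qs_def using cA(1) c1 c2 between less.prems(1) by blast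
      then have "c \<in> Q g" unfolding Q_def .
      then have "c \<notin> A (Suc g)" by simp
      moreover have "c \<in> A (Suc g)" using mE unfolding c_def E_def by blast
      ultimately show False by blast
    qed
  qed
qed

lemma BB_once: "x \<in> BB n \<Longrightarrow> 0 < m \<Longrightarrow> Tz (int m) x \<notin> BB n"
  unfolding BB_def using E_once F_once by (cases n) auto

lemma Xh_univ: "metrically_universal T Xh"
  unfolding metrically_universal_def
proof (intro conjI ballI)
  show "Xh \<in> sets borel" by measurable
  fix M assume M: "M \<in> M_ap T"
  interpret prob_space M using Map_prob[OF M] .
  have sM: "sets M = sets borel" using Map_sets[OF M] .
  have sp: "space M = UNIV" using Map_space[OF M] .
  have null0: "emeasure M (BB n) = 0" for n
    by (rule null_once[OF M BB_meas]) (rule BB_once)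
  have null: "emeasure M (Tz j -` BB n) = 0" for j n
    using Map_inv[OF M BB_meas[of n], of j] null0[of n] by simp
  have "UNIV - Xh = (\<Union>p. Tz (int_decode (fst (prod_decode p))) -` BB (snd (prod_decode p)))"
  proof -
    have "UNIV - Xh = {x. \<exists>j n. Tz j x \<in> BB n}" unfolding Xh_def by auto
    also have "\<dots> = (\<Union>p. Tz (int_decode (fst (prod_decode p))) -` BB (snd (prod_decode p)))"
    proof safe
      fix x j n assume "Tz j x \<in> BB n"
      then show "x \<in> (\<Union>p. Tz (int_decode (fst (prod_decode p))) -` BB (snd (prod_decode p)))"
        by (intro UN_I[of "prod_encode (int_encode j, n)"]) auto
    qed auto
    finally show ?thesis .
  qed
  moreover have "emeasure M (\<Union>p. Tz (int_decode (fst (prod_decode p))) -` BB (snd (prod_decode p))) = 0"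
    by (rule emeasure_UN_eq_0) (auto simp: null sM)
  ultimately have "emeasure M (space M - Xh) = 0" using sp by simp
  then have "prob (space M - Xh) = 0" by (simp add: measure_def)
  moreover have "Xh \<in> events" using sM by simp
  ultimately have "prob Xh = 1" using prob_compl[of Xh] by simp
  then show "emeasure M Xh = 1" using emeasure_eq_measure[of Xh] by simp
qed

end

context cons begin

lemma Tz_add_eq: "i + j = k \<Longrightarrow> Tz i (Tz j x) = Tz k x" by (simp add: Tz_add)

definition hi :: "nat \<Rightarrow> 'a \<Rightarrow> nat" where "hi n w = (LEAST i. 0 < i \<and> Tz (int i) w \<in> L n)"
definition lo :: "nat \<Rightarrow> 'a \<Rightarrow> nat" where "lo n w = (LEAST i. Tz (- int i) w \<in> L n)"
definition lep :: "nat \<Rightarrow> 'a \<Rightarrow> 'a" where "lep n w = Tz (- int (lo n w)) w"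
definition nxt :: "nat \<Rightarrow> 'a \<Rightarrow> 'a" where "nxt n w = Tz (int (hi n w)) w"

lemma hi_eq: assumes "0 < d" "Tz (int d) w \<in> L n" "\<forall>d'. 0 < d' \<and> d' < d \<longrightarrow> Tz (int d') w \<notin> L n"
  shows "hi n w = d"
  unfolding hi_def
proof (rule Least_equality)
  show "0 < d \<and> Tz (int d) w \<in> L n" using assms by simp
  fix y assume "0 < y \<and> Tz (int y) w \<in> L n"
  then show "d \<le> y" using assms(3) by (meson not_le)
qed

lemma hi_prop: assumes "w \<in> Xh"
  shows "0 < hi n w" "Tz (int (hi n w)) w \<in> L n" "\<forall>d'. 0 < d' \<and> d' < hi n w \<longrightarrow> Tz (int d') w \<notin> L n"
proof -
  obtain d where d: "0 < d" "Tz (int d) w \<in> L n" "\<forall>d'. 0 < d' \<and> d' < d \<longrightarrow> Tz (int d') w \<notin> L n"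
    using least_pos[OF up_L[OF assms]] by blast
  have "hi n w = d" using hi_eq[OF d] .
  then show "0 < hi n w" "Tz (int (hi n w)) w \<in> L n" "\<forall>d'. 0 < d' \<and> d' < hi n w \<longrightarrow> Tz (int d') w \<notin> L n"
    using d by auto
qed

lemma lo_eq: assumes "Tz (- int k) w \<in> L n" "\<forall>i<k. Tz (- int i) w \<notin> L n"
  shows "lo n w = k"
  unfolding lo_def
proof (rule Least_equality)
  show "Tz (- int k) w \<in> L n" using assms by simp
  fix y assume "Tz (- int y) w \<in> L n"
  then show "k \<le> y" using assms(2) by (meson not_le)
qed

lemma lo_prop: assumes "w \<in> Xh"
  shows "Tz (- int (lo n w)) w \<in> L n" "\<forall>i<lo n w. Tz (- int i) w \<notin> L n"
proof -
  obtain i where "0 < i" "Tz (- int i) w \<in> L n" using dn_L[OF assms] by blast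
  then have "\<exists>k. Tz (- int k) w \<in> L n" by blast
  from least_nat[OF this] obtain k where k: "Tz (- int k) w \<in> L n" "\<forall>i<k. Tz (- int i) w \<notin> L n" by blast
  have "lo n w = k" using lo_eq[OF k] .
  then show "Tz (- int (lo n w)) w \<in> L n" "\<forall>i<lo n w. Tz (- int i) w \<notin> L n" using k by auto
qed

lemma lep_in: "w \<in> Xh \<Longrightarrow> lep n w \<in> L n" unfolding lep_def using lo_prop by blast
lemma lep_Xh: "w \<in> Xh \<Longrightarrow> lep n w \<in> Xh" unfolding lep_def by (rule Xh_shift)
lemma nxt_in: "w \<in> Xh \<Longrightarrow> nxt n w \<in> L n" unfolding nxt_def using hi_prop by blast
lemma nxt_Xh: "w \<in> Xh \<Longrightarrow> nxt n w \<in> Xh" unfolding nxt_def by (rule Xh_shift)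

lemma lo_lt_hi: assumes w: "w \<in> Xh" shows "lo n w < hi n (lep n w)"
proof (rule ccontr)
  assume "\<not> lo n w < hi n (lep n w)"
  then have le: "hi n (lep n w) \<le> lo n w" by simp
  have h: "0 < hi n (lep n w)" "Tz (int (hi n (lep n w))) (lep n w) \<in> L n"
    using hi_prop[OF lep_Xh[OF w]] by auto
  have "Tz (int (hi n (lep n w))) (lep n w) = Tz (- int (lo n w - hi n (lep n w))) w"
    using le unfolding lep_def by (intro Tz_add_eq) (simp add: of_nat_diff)
  moreover have "lo n w - hi n (lep n w) < lo n w" using h(1) le by simp
  ultimately show False using lo_prop(2)[OF w] h(2) by metis
qed

lemma lep_stay: assumes w: "w \<in> Xh" and ns: "lep n w \<notin> S n"
  shows "lo (Suc n) w = lo n w"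
proof (rule lo_eq)
  show "Tz (- int (lo n w)) w \<in> L (Suc n)" using ns lep_in[OF w] unfolding S_def lep_def by auto
  show "\<forall>i<lo n w. Tz (- int i) w \<notin> L (Suc n)" using lo_prop(2)[OF w] L_Suc_sub by blast
qed

lemma lep_step: assumes w: "w \<in> Xh" and s: "lep n w \<in> S n"
  shows "\<exists>i. 0 < i \<and> lo (Suc n) w = lo n w + i \<and> hi n (lep (Suc n) w) = i
      \<and> nxt n (lep (Suc n) w) = lep n w \<and> lep (Suc n) w \<in> L (Suc n)"
proof -
  define a where "a = lep n w"
  from S_prev[OF s[folded a_def]] obtain i where i: "0 < i" "Tz (- int i) a \<in> L (Suc n)"
    "\<forall>i'. 0 < i' \<and> i' < i \<longrightarrow> Tz (- int i') a \<notin> L n" by blast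
  have aL: "a \<notin> L (Suc n)" using s unfolding a_def S_def by simp
  have eqa: "Tz (- int i) a = Tz (- int (lo n w + i)) w" unfolding a_def lep_def by (intro Tz_add_eq) simp
  have lo1: "lo (Suc n) w = lo n w + i"
  proof (rule lo_eq)
    show "Tz (- int (lo n w + i)) w \<in> L (Suc n)" using i(2) eqa by simp
    show "\<forall>i'<lo n w + i. Tz (- int i') w \<notin> L (Suc n)"
    proof (intro allI impI)
      fix i' assume i': "i' < lo n w + i"
      consider "i' < lo n w" | "i' = lo n w" | "lo n w < i'" by linarith
      then show "Tz (- int i') w \<notin> L (Suc n)"
      proof cases
        case 1 then show ?thesis using lo_prop(2)[OF w] L_Suc_sub by blast
      next
        case 2 then show ?thesis using aL unfolding a_def lep_def by simp
      next
        case 3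
        have "Tz (- int i') w = Tz (- int (i' - lo n w)) a" unfolding a_def lep_def using 3 by (simp add: Tz_add)
        moreover have "0 < i' - lo n w" "i' - lo n w < i" using 3 i' by auto
        ultimately show ?thesis using i(3) L_Suc_sub by (metis subsetD)
      qed
    qed
  qed
  have lep1: "lep (Suc n) w = Tz (- int i) a" unfolding lep_def lo1 eqa ..
  have hi1: "hi n (Tz (- int i) a) = i"
  proof (rule hi_eq)
    show "0 < i" by fact
    show "Tz (int i) (Tz (- int i) a) \<in> L n" using lep_in[OF w] unfolding a_def by (simp add: Tz_add)
    show "\<forall>d'. 0 < d' \<and> d' < i \<longrightarrow> Tz (int d') (Tz (- int i) a) \<notin> L n"
    proof (intro allI impI)
      fix d' assume d': "0 < d' \<and> d' < i"
      have "Tz (int d') (Tz (- int i) a) = Tz (- int (i - d')) a" using d' by (simp add: Tz_add)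
      moreover have "0 < i - d'" "i - d' < i" using d' by auto
      ultimately show "Tz (int d') (Tz (- int i) a) \<notin> L n" using i(3) by metis
    qed
  qed
  have "nxt n (lep (Suc n) w) = a" unfolding nxt_def lep1 hi1 by (simp add: Tz_add)
  then show ?thesis using i(1,2) lo1 lep1 hi1 unfolding a_def by auto
qed

lemma hi_step: assumes a: "a \<in> Xh" "a \<in> L (Suc n)" and c: "nxt n a \<in> S n"
  shows "hi (Suc n) a = hi n a + hi n (nxt n a)"
proof -
  define c where "c = nxt n a"
  have cX: "c \<in> Xh" unfolding c_def using nxt_Xh[OF a(1)] .
  have hc: "0 < hi n c" "Tz (int (hi n c)) c \<in> L n" "\<forall>d'. 0 < d' \<and> d' < hi n c \<longrightarrow> Tz (int d') c \<notin> L n"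
    using hi_prop[OF cX] by auto
  have ha: "0 < hi n a" "Tz (int (hi n a)) a \<in> L n" "\<forall>d'. 0 < d' \<and> d' < hi n a \<longrightarrow> Tz (int d') a \<notin> L n"
    using hi_prop[OF a(1)] by auto
  have "Tz (int (hi n c)) c \<notin> S n" using S_no_two[OF c[folded c_def] hc] .
  then have c2: "Tz (int (hi n c)) c \<in> L (Suc n)" using hc(2) unfolding S_def by simp
  have ceq: "c = Tz (int (hi n a)) a" unfolding c_def nxt_def ..
  have cnot: "c \<notin> L (Suc n)" using c unfolding c_def S_def by simp
  have "hi (Suc n) a = hi n a + hi n c"
  proof (rule hi_eq)
    show "0 < hi n a + hi n c" using ha by simp
    have "Tz (int (hi n c)) c = Tz (int (hi n a + hi n c)) a" unfolding ceq by (intro Tz_add_eq) simp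
    then show "Tz (int (hi n a + hi n c)) a \<in> L (Suc n)" using c2 by simp
    show "\<forall>d'. 0 < d' \<and> d' < hi n a + hi n c \<longrightarrow> Tz (int d') a \<notin> L (Suc n)"
    proof (intro allI impI)
      fix d' assume d': "0 < d' \<and> d' < hi n a + hi n c"
      consider "d' < hi n a" | "d' = hi n a" | "hi n a < d'" by linarith
      then show "Tz (int d') a \<notin> L (Suc n)"
      proof cases
        case 1 then show ?thesis using ha(3) d' L_Suc_sub by blast
      next
        case 2 then show ?thesis using cnot ceq by simp
      next
        case 3
        have "Tz (int d') a = Tz (int (d' - hi n a)) c" unfolding ceq using 3 by (simp add: Tz_add)
        moreover have "0 < d' - hi n a" "d' - hi n a < hi n c" using 3 d' by auto
        ultimately show ?thesis using hc(3) L_Suc_sub by (metis subsetD)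
      qed
    qed
  qed
  then show ?thesis unfolding c_def .
qed

lemma hi_stay: assumes a: "a \<in> Xh" "a \<in> L (Suc n)" and c: "nxt n a \<notin> S n"
  shows "hi (Suc n) a = hi n a"
proof (rule hi_eq)
  have ha: "0 < hi n a" "Tz (int (hi n a)) a \<in> L n" "\<forall>d'. 0 < d' \<and> d' < hi n a \<longrightarrow> Tz (int d') a \<notin> L n"
    using hi_prop[OF a(1)] by auto
  show "0 < hi n a" by (fact ha(1))
  show "Tz (int (hi n a)) a \<in> L (Suc n)" using ha(2) c unfolding S_def nxt_def by simp
  show "\<forall>d'. 0 < d' \<and> d' < hi n a \<longrightarrow> Tz (int d') a \<notin> L (Suc n)" using ha(3) L_Suc_sub by blast
qed

end

fun dim :: "uavert \<Rightarrow> nat" where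
  "dim Root = 1"
| "dim (Pair u v) = dim u + dim v"
| "dim (Cp u) = dim u"

lemma dim_pos: "0 < dim v" by (induction v) auto

fun lp :: "nat \<Rightarrow> nat \<Rightarrow> uavert \<Rightarrow> nat set" where
  "lp 0 m v = {0}"
| "lp (Suc N) m v = (if m = Suc N then {0} else
     (case v of Pair u w \<Rightarrow> lp N m u \<union> (\<lambda>r. dim u + r) ` lp N m w | Cp u \<Rightarrow> lp N m u | Root \<Rightarrow> {}))"

lemma lp_bound: "r \<in> lp N m v \<Longrightarrow> r < dim v"
proof (induction N arbitrary: v r)
  case 0 then show ?case using dim_pos by simp
next
  case (Suc N)
  show ?case
  proof (cases "m = Suc N")
    case True then show ?thesis using Suc.prems dim_pos by simp
  next
    case False
    then show ?thesis using Suc by (cases v) fastforce+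
  qed
qed

context cons begin

fun vert :: "nat \<Rightarrow> 'a \<Rightarrow> uavert" where
  "vert 0 a = Root"
| "vert (Suc n) a = (if nxt n a \<in> S n then Pair (vert n a) (vert n (nxt n a)) else Cp (vert n a))"

lemma vert_level: "vert n a \<in> UA_level n"
  by (induction n arbitrary: a) auto

lemma hi0: "hi 0 a = 1"
  by (rule hi_eq) (auto simp: L0)

lemma dim_vert: "a \<in> Xh \<Longrightarrow> a \<in> L n \<Longrightarrow> dim (vert n a) = hi n a"
proof (induction n arbitrary: a)
  case 0 then show ?case by (simp add: hi0)
next
  case (Suc n)
  have aL: "a \<in> L n" using Suc.prems(2) L_Suc_sub by blast
  show ?case
  proof (cases "nxt n a \<in> S n")
    case True
    have "dim (vert (Suc n) a) = dim (vert n a) + dim (vert n (nxt n a))" using True by simp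
    also have "\<dots> = hi n a + hi n (nxt n a)"
      using Suc.IH[OF Suc.prems(1) aL] Suc.IH[OF nxt_Xh[OF Suc.prems(1)] nxt_in[OF Suc.prems(1)]] by simp
    also have "\<dots> = hi (Suc n) a" using hi_step[OF Suc.prems True] by simp
    finally show ?thesis .
  next
    case False
    then show ?thesis using Suc.IH[OF Suc.prems(1) aL] hi_stay[OF Suc.prems False] by simp
  qed
qed

lemma decode: assumes "a \<in> Xh" "a \<in> L K1" "m \<le> K1" "r < hi K1 a"
  shows "Tz (int r) a \<in> L m \<longleftrightarrow> r \<in> lp K1 m (vert K1 a)"
  using assms
proof (induction K1 arbitrary: a m r)
  case 0
  then show ?case by (simp add: hi0 L0)
next
  case (Suc K1)
  have aL: "a \<in> L K1" using Suc.prems(2) L_Suc_sub by blast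
  show ?case
  proof (cases "m = Suc K1")
    case True
    have "Tz (int r) a \<in> L (Suc K1) \<longleftrightarrow> r = 0"
    proof
      assume "Tz (int r) a \<in> L (Suc K1)"
      then show "r = 0" using hi_prop(3)[OF Suc.prems(1), of "Suc K1"] Suc.prems(4) by (metis not_gr0)
    next
      assume "r = 0" then show "Tz (int r) a \<in> L (Suc K1)" using Suc.prems(2) by simp
    qed
    then show ?thesis using True by simp
  next
    case False
    then have mN: "m \<le> K1" using Suc.prems(3) by simp
    show ?thesis
    proof (cases "nxt K1 a \<in> S K1")
      case True
      define c where "c = nxt K1 a"
      have cX: "c \<in> Xh" "c \<in> L K1" unfolding c_def using nxt_Xh[OF Suc.prems(1)] nxt_in[OF Suc.prems(1)] by auto
      have hS: "hi (Suc K1) a = hi K1 a + hi K1 c" unfolding c_def using hi_step[OF Suc.prems(1,2) True] .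
      have dv: "dim (vert K1 a) = hi K1 a" using dim_vert[OF Suc.prems(1) aL] .
      have vS: "vert (Suc K1) a = Pair (vert K1 a) (vert K1 c)" using True unfolding c_def by simp
      have lpS: "lp (Suc K1) m (vert (Suc K1) a) = lp K1 m (vert K1 a) \<union> (\<lambda>r. hi K1 a + r) ` lp K1 m (vert K1 c)"
        using False vS dv by simp
      show ?thesis
      proof (cases "r < hi K1 a")
        case True
        have "r \<notin> (\<lambda>r. hi K1 a + r) ` lp K1 m (vert K1 c)" using True by auto
        then show ?thesis using Suc.IH[OF Suc.prems(1) aL mN True] lpS by simp
      next
        case False
        define r' where "r' = r - hi K1 a"
        have r: "r = hi K1 a + r'" unfolding r'_def using False by simp
        have r'lt: "r' < hi K1 c" using Suc.prems(4) hS r by simp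
        have "r \<notin> lp K1 m (vert K1 a)" using lp_bound[of r K1 m "vert K1 a"] dv False by auto
        then have "r \<in> lp (Suc K1) m (vert (Suc K1) a) \<longleftrightarrow> r' \<in> lp K1 m (vert K1 c)" using lpS r by auto
        moreover have "Tz (int r) a = Tz (int r') c" unfolding r c_def nxt_def by (intro Tz_add_eq[symmetric]) simp
        ultimately show ?thesis using Suc.IH[OF cX mN r'lt] by simp
      qed
    next
      case nS: False
      have "vert (Suc K1) a = Cp (vert K1 a)" using nS by simp
      then have "lp (Suc K1) m (vert (Suc K1) a) = lp K1 m (vert K1 a)" using False by simp
      moreover have "r < hi K1 a" using Suc.prems(4) hi_stay[OF Suc.prems(1,2) nS] by simp
      ultimately show ?thesis using Suc.IH[OF Suc.prems(1) aL mN] by simp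
    qed
  qed
qed

end

fun lch :: "uavert \<Rightarrow> uavert" where
  "lch (Pair u v) = u"
| "lch _ = Root"

fun pos :: "(nat \<Rightarrow> uaedge) \<Rightarrow> nat \<Rightarrow> nat" where
  "pos p 0 = 0"
| "pos p (Suc k) = pos p k + (if snd (p k) then dim (lch (fst (p k))) else 0)"

context cons begin

definition Phi :: "'a \<Rightarrow> nat \<Rightarrow> uaedge" where
  "Phi w = (\<lambda>k. (vert (Suc k) (lep (Suc k) w), lep k w \<in> S k))"

lemma pos_Phi: assumes w: "w \<in> Xh" shows "pos (Phi w) k = lo k w"
proof (induction k)
  case 0
  have "lo 0 w = 0" by (rule lo_eq) (auto simp: L0)
  then show ?case by simp
next
  case (Suc k)
  show ?case
  proof (cases "lep k w \<in> S k")
    case True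
    from lep_step[OF w True] obtain i where i: "0 < i" "lo (Suc k) w = lo k w + i"
      "hi k (lep (Suc k) w) = i" "nxt k (lep (Suc k) w) = lep k w" "lep (Suc k) w \<in> L (Suc k)" by blast
    define p where "p = lep (Suc k) w"
    have pL: "p \<in> L k" using i(5) L_Suc_sub unfolding p_def by blast
    have pX: "p \<in> Xh" unfolding p_def using lep_Xh[OF w] .
    have "vert (Suc k) p = Pair (vert k p) (vert k (lep k w))" using i(4) True unfolding p_def by simp
    then have "dim (lch (fst (Phi w k))) = dim (vert k p)" unfolding Phi_def p_def by simp
    also have "\<dots> = i" using dim_vert[OF pX pL] i(3) unfolding p_def by simp
    finally show ?thesis using Suc.IH True i(2) unfolding Phi_def by simp
  next
    case False
    then show ?thesis using Suc.IH lep_stay[OF w False] unfolding Phi_def by simp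
  qed
qed

lemma vert_Phi: assumes "Phi x = Phi y" shows "vert n (lep n x) = vert n (lep n y)"
proof (cases n)
  case 0 then show ?thesis by simp
next
  case (Suc k)
  have "fst (Phi x k) = fst (Phi y k)" using assms by simp
  then show ?thesis unfolding Phi_def Suc by simp
qed

lemma avoid: assumes x: "x \<in> Xh" and I: "finite I" shows "\<exists>n\<ge>m. \<forall>i\<in>I. Tz i x \<notin> L n"
  using I
proof (induction I rule: finite_induct)
  case empty then show ?case by auto
next
  case (insert i I)
  then obtain n1 where n1: "n1 \<ge> m" "\<forall>i\<in>I. Tz i x \<notin> L n1" by blast
  obtain n2 where n2: "n2 \<ge> n1" "Tz i x \<notin> L n2" using rm_L_ge[OF Xh_shift[OF x, of i]] by blast
  have "\<forall>i\<in>I. Tz i x \<notin> L n2" using n1(2) L_mono[OF n2(1)] by blast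
  then show ?case using n1(1) n2 by (intro exI[of _ n2]) auto
qed

lemma grow: assumes x: "x \<in> Xh"
  shows "\<exists>n\<ge>m. 0 \<le> int (lo n x) + j \<and> int (lo n x) + j < int (hi n (lep n x))"
proof (cases "0 \<le> j")
  case True
  obtain n where n: "n \<ge> m" "\<forall>i\<in>{1..j}. Tz i x \<notin> L n" using avoid[OF x, of "{1..j}" m] by auto
  have "int (lo n x) + j < int (hi n (lep n x))"
  proof (rule ccontr)
    assume "\<not> ?thesis"
    then have le: "int (hi n (lep n x)) \<le> int (lo n x) + j" by simp
    define h where "h = hi n (lep n x)"
    have h: "0 < h" "Tz (int h) (lep n x) \<in> L n" unfolding h_def using hi_prop[OF lep_Xh[OF x]] by auto
    have eq: "Tz (int h) (lep n x) = Tz (int h - int (lo n x)) x" unfolding lep_def by (intro Tz_add_eq) simp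
    consider "h < lo n x" | "h = lo n x" | "lo n x < h" by linarith
    then show False
    proof cases
      case 1
      have "Tz (int h - int (lo n x)) x = Tz (- int (lo n x - h)) x" using 1 by (simp add: of_nat_diff)
      moreover have "lo n x - h < lo n x" using 1 h(1) by simp
      ultimately show False using lo_prop(2)[OF x, of n] h(2) eq by metis
    next
      case 2
      then have "x \<in> L n" using h(2) eq by simp
      moreover have "0 < lo n x" using 2 h(1) by simp
      ultimately show False using lo_prop(2)[OF x, of n] by (metis Tz0 of_nat_0 neg_0_equal_iff_equal)
    next
      case 3
      have "int h - int (lo n x) \<in> {1..j}" using 3 le unfolding h_def by auto
      then show False using n(2) h(2) eq by metis
    qed
  qed
  then show ?thesis using n(1) True by (intro exI[of _ n]) auto
next
  case False
  obtain n where n: "n \<ge> m" "\<forall>i\<in>{j+1..0}. Tz i x \<notin> L n" using avoid[OF x, of "{j+1..0}" m] by auto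
  have "- j \<le> int (lo n x)"
  proof (rule ccontr)
    assume "\<not> ?thesis"
    then have "- int (lo n x) \<in> {j+1..0}" by auto
    then show False using n(2) lo_prop(1)[OF x, of n] by metis
  qed
  moreover have "lo n x < hi n (lep n x)" using lo_lt_hi[OF x] .
  ultimately show ?thesis using n(1) False by (intro exI[of _ n]) auto
qed

lemma Phi_L: assumes x: "x \<in> Xh" and y: "y \<in> Xh" and eq: "Phi x = Phi y"
  shows "Tz j x \<in> L m \<longleftrightarrow> Tz j y \<in> L m"
proof -
  obtain n where n: "n \<ge> m" "0 \<le> int (lo n x) + j" "int (lo n x) + j < int (hi n (lep n x))"
    using grow[OF x] by blast
  have lo: "lo n x = lo n y" using pos_Phi[OF x, of n] pos_Phi[OF y, of n] eq by simp
  have vv: "vert n (lep n x) = vert n (lep n y)" using vert_Phi[OF eq] .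
  have hh: "hi n (lep n x) = hi n (lep n y)"
    using dim_vert[OF lep_Xh[OF x] lep_in[OF x, of n]] dim_vert[OF lep_Xh[OF y] lep_in[OF y, of n]] vv by simp
  define r where "r = nat (int (lo n x) + j)"
  have r: "int r = int (lo n x) + j" unfolding r_def using n(2) by simp
  have rlt: "r < hi n (lep n x)" using n(3) r by linarith
  have ex: "Tz (int r) (lep n x) = Tz j x" unfolding lep_def by (intro Tz_add_eq) (simp add: r)
  have ey: "Tz (int r) (lep n y) = Tz j y" unfolding lep_def by (intro Tz_add_eq) (simp add: r lo)
  have "Tz j x \<in> L m \<longleftrightarrow> r \<in> lp n m (vert n (lep n x))"
    using decode[OF lep_Xh[OF x] lep_in[OF x] n(1) rlt] ex by simp
  moreover have "Tz j y \<in> L m \<longleftrightarrow> r \<in> lp n m (vert n (lep n y))"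
  proof -
    have "r < hi n (lep n y)" using rlt hh by simp
    from decode[OF lep_Xh[OF y] lep_in[OF y] n(1) this] show ?thesis using ey by simp
  qed
  ultimately show ?thesis using vv by simp
qed

lemma near: assumes x: "x \<in> Xh" shows "\<exists>d. 0 < d \<and> d \<le> 2 ^ g \<and> Tz (int d) x \<in> A g"
proof -
  have "\<exists>e. Tz (- int e) x \<in> A g" using dn_A[OF x, of g] by blast
  from least_nat[OF this] obtain e where e: "Tz (- int e) x \<in> A g" "\<forall>e'<e. Tz (- int e') x \<notin> A g" by blast
  define a where "a = Tz (- int e) x"
  have aX: "a \<in> Xh" unfolding a_def using Xh_shift[OF x] .
  from least_pos[OF up_A[OF aX, of g]] obtain d0 where d0: "0 < d0" "Tz (int d0) a \<in> A g"
    "\<forall>d'. 0 < d' \<and> d' < d0 \<longrightarrow> Tz (int d') a \<notin> A g" by blast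
  have b: "d0 \<le> 2 ^ g" using gapA[OF e(1)[folded a_def] d0] .
  have "e < d0"
  proof (rule ccontr)
    assume "\<not> e < d0"
    then have "Tz (int d0) a = Tz (- int (e - d0)) x" unfolding a_def by (intro Tz_add_eq) (simp add: of_nat_diff)
    moreover have "e - d0 < e" using d0(1) \<open>\<not> e < d0\<close> by simp
    ultimately show False using e(2) d0(2) by metis
  qed
  have "Tz (int (d0 - e)) x = Tz (int d0) a" unfolding a_def using \<open>e < d0\<close>
    by (intro Tz_add_eq[symmetric]) (simp add: of_nat_diff)
  then show ?thesis using d0(2) b \<open>e < d0\<close> by (intro exI[of _ "d0 - e"]) auto
qed

lemma removal: assumes b: "b \<in> Xh" "b \<in> A g" shows "\<exists>g'\<ge>g. b \<in> Q g'"
proof -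
  have "\<exists>h. b \<notin> A h" using rm_A[OF b(1)] .
  from least_nat[OF this] obtain h where h: "b \<notin> A h" "\<forall>h'<h. b \<in> A h'" by blast
  have "h \<noteq> 0" using h(1) by (cases h) auto
  then obtain g' where g': "h = Suc g'" by (cases h) auto
  have "b \<in> A g'" using h(2) g' by simp
  moreover have "b \<notin> A (Suc g')" using h(1) g' by simp
  ultimately have bQ: "b \<in> Q g'" by simp
  have "g \<le> g'"
  proof (rule ccontr)
    assume "\<not> g \<le> g'"
    then have "Suc g' \<le> g" by simp
    then show False using A_mono b(2) h(1) g' by blast
  qed
  then show ?thesis using bQ by blast
qed

lemma lvl_all: assumes "t < N g" shows "\<exists>n. lvl n = (g, t)"
proof -
  obtain n where n: "lvl n = (g, 0)" using lvl_start by blast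
  have "lvl (n + t) = (g, t)" using assms
    by (induction t) (auto simp: n)
  then show ?thesis by blast
qed

lemma Phi_inj: assumes x: "x \<in> Xh" and y: "y \<in> Xh" and eq: "Phi x = Phi y" shows "x = y"
proof (rule ccontr)
  assume "x \<noteq> y"
  then obtain k where k: "x \<in> U k" "y \<notin> U k" using Usep by blast
  obtain d where d: "0 < d" "d \<le> 2 ^ k" "Tz (int d) x \<in> A k" using near[OF x] by blast
  define b where "b = Tz (int d) x"
  have bX: "b \<in> Xh" unfolding b_def using Xh_shift[OF x] .
  obtain g' where g': "g' \<ge> k" "b \<in> Q g'" using removal[OF bX d(3)[folded b_def]] by blast
  obtain n where n: "lvl n = (g', code g' b)" using lvl_all[OF code_lt] by blast
  have "b \<in> S n" using S_eq[OF n] g'(2) by simp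
  then have "Tz (int d) y \<in> S n" unfolding b_def S_def using Phi_L[OF x y eq] by blast
  then have yS: "Tz (int d) y \<in> Q g'" "code g' (Tz (int d) y) = code g' b" using S_eq[OF n] by auto
  have "(2::nat) ^ k \<le> 2 ^ g'" using g'(1) by (simp add: power_increasing)
  then have dd: "d \<le> 2 ^ g'" using d(2) by linarith
  then have "int d \<le> int (2 ^ g')" by linarith
  then have "int d \<le> 2 ^ g'" by simp
  moreover have "- int d \<le> 2 ^ g'" by (smt (verit) zero_le_power of_nat_0_le_iff)
  ultimately have "(k, - int d) \<in> Ix g'" unfolding Ix_def using g'(1) by auto
  from code_eq_bits[OF yS(2)[symmetric] this]
  have "(Tz (- int d) b \<in> U k) = (Tz (- int d) (Tz (int d) y) \<in> U k)" by simp
  moreover have "Tz (- int d) b = x" "Tz (- int d) (Tz (int d) y) = y" unfolding b_def by (simp_all add: Tz_add)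
  ultimately show False using k by simp
qed

end

definition LF :: "(nat \<Rightarrow> uaedge) \<Rightarrow> nat \<Rightarrow> bool" where
  "LF p k \<longleftrightarrow> (\<exists>u v. fst (p k) = Pair u v) \<and> \<not> snd (p k)"

lemma src_eq: assumes "p \<in> UA_paths" "q \<in> UA_paths" "p (Suc k) = q (Suc k)" shows "fst (p k) = fst (q k)"
proof -
  have "edge_src (p (Suc k)) = fst (p k)" "edge_src (q (Suc k)) = fst (q k)"
    using assms(1,2) unfolding UA_paths_def by auto
  then show ?thesis using assms(3) by simp
qed

lemma agree_above: assumes "p \<in> UA_paths" "q \<in> UA_paths" "\<forall>k>j. p k = q k" shows "fst (p j) = fst (q j)"
  using src_eq[OF assms(1,2)] assms(3) by simp

lemma valid_True: assumes "p \<in> UA_paths" "snd (p k)" shows "\<exists>u v. fst (p k) = Pair u v"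
proof -
  have "valid_label (fst (p k)) (snd (p k))" using assms(1) unfolding UA_paths_def by auto
  then show ?thesis using assms(2) by (cases "fst (p k)") auto
qed

lemma adic_less_total:
  assumes p: "p \<in> UA_paths" and q: "q \<in> UA_paths" and ne: "p \<noteq> q" and tail: "\<forall>k>j. p k = q k"
  shows "adic_less p q \<or> adic_less q p"
proof -
  have "{k. p k \<noteq> q k} \<subseteq> {..j}" using tail by (auto simp: not_le[symmetric])
  then have fin: "finite {k. p k \<noteq> q k}" using finite_subset by blast
  have nem: "{k. p k \<noteq> q k} \<noteq> {}" using ne by auto
  define m where "m = Max {k. p k \<noteq> q k}"
  have m1: "p m \<noteq> q m" using Max_in[OF fin nem] unfolding m_def by simp
  have m2: "\<forall>k>m. p k = q k"
  proof (intro allI impI)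
    fix k assume k: "m < k"
    show "p k = q k"
    proof (rule ccontr)
      assume "p k \<noteq> q k"
      then have "k \<le> m" using Max_ge[OF fin, of k] unfolding m_def by simp
      then show False using k by simp
    qed
  qed
  have "fst (p m) = fst (q m)" using agree_above[OF p q m2] .
  then have "snd (p m) \<noteq> snd (q m)" using m1 by (auto simp: prod_eq_iff)
  then have "snd (p m) < snd (q m) \<or> snd (q m) < snd (p m)" by auto
  then show ?thesis
  proof
    assume "snd (p m) < snd (q m)"
    then have "adic_less p q" unfolding adic_less_def using m1 m2 by (intro exI[of _ m]) simp
    then show ?thesis ..
  next
    assume "snd (q m) < snd (p m)"
    then have "adic_less q p" unfolding adic_less_def using m1 m2 by (intro exI[of _ m]) simp
    then show ?thesis ..
  qed
qed

lemma adic_succ: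
  assumes p: "p \<in> UA_paths" and q: "q \<in> UA_paths"
    and pj: "fst (p j) = Pair u v" "\<not> snd (p j)" and qj: "q j = (Pair u v, True)"
    and above: "\<forall>k>j. q k = p k" and below: "\<forall>k<j. \<not> LF p k"
    and qbelow: "\<forall>k<j. \<not> snd (q k)"
  shows "p \<in> adic_dom" "adic_shift p = q"
proof -
  have pq: "adic_less p q" unfolding adic_less_def
    using pj qj above by (intro exI[of _ j]) (auto simp: prod_eq_iff)
  then show "p \<in> adic_dom" unfolding adic_dom_def using p q by auto
  have nobetween: "\<not> (\<exists>r\<in>UA_paths. adic_less p r \<and> adic_less r q)"
  proof
    assume "\<exists>r\<in>UA_paths. adic_less p r \<and> adic_less r q"
    then obtain r where r: "r \<in> UA_paths" "adic_less p r" "adic_less r q" by blast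
    from r(2) obtain j1 where j1: "p j1 \<noteq> r j1" "\<forall>k>j1. p k = r k" "snd (p j1) < snd (r j1)"
      unfolding adic_less_def by blast
    from r(3) obtain j2 where j2: "r j2 \<noteq> q j2" "\<forall>k>j2. r k = q k" "snd (r j2) < snd (q j2)"
      unfolding adic_less_def by blast
    consider "j < j1" | "j1 = j" | "j1 < j" by linarith
    then show False
    proof cases
      case 1
      have qp1: "q j1 = p j1" using above 1 by simp
      have "j2 = j1"
      proof (rule ccontr)
        assume "j2 \<noteq> j1"
        then consider "j2 < j1" | "j1 < j2" by linarith
        then show False
        proof cases
          case 1 then show False using j2(2) j1(1) qp1 by simp
        next
          case 2 then have "r j2 = p j2" using j1(2) by simp
          moreover have "q j2 = p j2" using above 2 \<open>j < j1\<close> by simp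
          ultimately show False using j2(1) by simp
        qed
      qed
      then show False using j1(3) j2(3) qp1 by (cases "snd (p j1)"; cases "snd (r j1)") auto
    next
      case 2
      have "snd (r j)" using j1(3) 2 by (cases "snd (r j)") auto
      moreover have "fst (r j) = fst (p j)" using agree_above[OF r(1) p, of j] j1(2) 2 by simp
      ultimately have rj: "r j = q j" using pj qj by (simp add: prod_eq_iff)
      have rq: "\<forall>k\<ge>j. r k = q k" using rj above j1(2) 2 by (metis le_eq_less_or_eq)
      have "j2 < j" using j2(1) rq by (meson not_le)
      then have "\<not> snd (q j2)" using qbelow by simp
      then show False using j2(3) by simp
    next
      case 3
      have "snd (r j1)" using j1(3) by (cases "snd (r j1)") auto
      then obtain u' v' where "fst (r j1) = Pair u' v'" using valid_True[OF r(1)] by blast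
      moreover have "fst (r j1) = fst (p j1)" using agree_above[OF r(1) p, of j1] j1(2) by simp
      moreover have "\<not> snd (p j1)" using j1(3) by (cases "snd (p j1)") auto
      ultimately have "LF p j1" unfolding LF_def by auto
      then show False using below 3 by simp
    qed
  qed
  show "adic_shift p = q" unfolding adic_shift_def
  proof (rule the_equality)
    show "q \<in> UA_paths \<and> adic_less p q \<and> \<not> (\<exists>r\<in>UA_paths. adic_less p r \<and> adic_less r q)"
      using q pq nobetween by simp
    fix q' assume q': "q' \<in> UA_paths \<and> adic_less p q' \<and> \<not> (\<exists>r\<in>UA_paths. adic_less p r \<and> adic_less r q')"
    show "q' = q"
    proof (rule ccontr)
      assume ne: "q' \<noteq> q"
      from q' obtain j' where j': "\<forall>k>j'. p k = q' k" unfolding adic_less_def by blast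
      have "\<forall>k>max j j'. q' k = q k" using j' above by simp
      from adic_less_total[OF conjunct1[OF q'] q ne this]
      show False using q' pq nobetween q by blast
    qed
  qed
qed

context cons begin

lemma lep_stay': assumes "w \<in> Xh" "lep n w \<notin> S n" shows "lep (Suc n) w = lep n w"
  unfolding lep_def using lep_stay[OF assms] by simp

lemma Phi_paths: assumes w: "w \<in> Xh" shows "Phi w \<in> UA_paths"
  unfolding UA_paths_def
proof (intro CollectI conjI allI)
  fix k
  show "fst (Phi w k) \<in> UA_level (Suc k)" unfolding Phi_def using vert_level by simp
  show "valid_label (fst (Phi w k)) (snd (Phi w k))"
  proof (cases "lep k w \<in> S k")
    case True
    from lep_step[OF w True] have "nxt k (lep (Suc k) w) = lep k w" by blast
    then show ?thesis unfolding Phi_def using True by simp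
  next
    case False
    then show ?thesis unfolding Phi_def by simp
  qed
  show "edge_src (Phi w (Suc k)) = fst (Phi w k)"
  proof (cases "lep (Suc k) w \<in> S (Suc k)")
    case True
    from lep_step[OF w True] have "nxt (Suc k) (lep (Suc (Suc k)) w) = lep (Suc k) w" by blast
    then show ?thesis unfolding Phi_def using True by simp
  next
    case False
    then show ?thesis unfolding Phi_def using lep_stay'[OF w False] by simp
  qed
next
  show "edge_src (Phi w 0) = Root" unfolding Phi_def by simp
qed

lemma last_block: assumes x: "x \<in> Xh" and Tx: "T x \<in> L k"
  shows "hi k (lep k x) = lo k x + 1" "nxt k (lep k x) = T x"
proof -
  show h: "hi k (lep k x) = lo k x + 1"
  proof (rule hi_eq)
    show "0 < lo k x + 1" by simp
    have "Tz (int (lo k x + 1)) (lep k x) = Tz 1 x" unfolding lep_def by (intro Tz_add_eq) simp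
    then show "Tz (int (lo k x + 1)) (lep k x) \<in> L k" using Tx by (simp add: Tz1)
    show "\<forall>d'. 0 < d' \<and> d' < lo k x + 1 \<longrightarrow> Tz (int d') (lep k x) \<notin> L k"
    proof (intro allI impI)
      fix d' assume d': "0 < d' \<and> d' < lo k x + 1"
      have "Tz (int d') (lep k x) = Tz (- int (lo k x - d')) x" unfolding lep_def using d'
        by (intro Tz_add_eq) (simp add: of_nat_diff)
      moreover have "lo k x - d' < lo k x" using d' by simp
      ultimately show "Tz (int d') (lep k x) \<notin> L k" using lo_prop(2)[OF x, of k] by simp
    qed
  qed
  have "Tz (int (lo k x + 1)) (lep k x) = Tz 1 x" unfolding lep_def by (intro Tz_add_eq) simp
  then show "nxt k (lep k x) = T x" unfolding nxt_def h by (simp add: Tz1)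
qed

lemma LF_at: assumes x: "x \<in> Xh" and Tx: "T x \<in> S k" shows "LF (Phi x) k"
proof -
  have TxL: "T x \<in> L k" using Tx by (simp add: S_def)
  have nx: "nxt k (lep k x) = T x" "hi k (lep k x) = lo k x + 1" using last_block[OF x TxL] by auto
  have "lep k x \<notin> S k"
  proof
    assume a: "lep k x \<in> S k"
    have h: "0 < hi k (lep k x)" "Tz (int (hi k (lep k x))) (lep k x) \<in> L k"
      "\<forall>d'. 0 < d' \<and> d' < hi k (lep k x) \<longrightarrow> Tz (int d') (lep k x) \<notin> L k"
      using hi_prop[OF lep_Xh[OF x]] by auto
    have "Tz (int (hi k (lep k x))) (lep k x) \<notin> S k" using S_no_two[OF a h] .
    then show False using nx Tx unfolding nxt_def by simp
  qed
  moreover then have "lep (Suc k) x = lep k x" using lep_stay'[OF x] by simp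
  ultimately show ?thesis unfolding LF_def Phi_def using nx Tx by simp
qed

lemma lep_Suc_S: assumes w: "w \<in> Xh" and s: "lep k w \<in> S k"
  shows "lep (Suc k) w = lep k (Tz (-1) (lep k w))"
proof -
  from lep_step[OF w s] obtain i where i: "0 < i" "hi k (lep (Suc k) w) = i"
    "nxt k (lep (Suc k) w) = lep k w" "lep (Suc k) w \<in> L (Suc k)" by blast
  define p where "p = lep (Suc k) w"
  define a where "a = lep k w"
  have pX: "p \<in> Xh" unfolding p_def using lep_Xh[OF w] .
  have hp: "\<forall>d'. 0 < d' \<and> d' < i \<longrightarrow> Tz (int d') p \<notin> L k" using hi_prop(3)[OF pX, of k] i(2) unfolding p_def by simp
  have ap: "a = Tz (int i) p" using i(3) i(2) unfolding nxt_def p_def a_def by simp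
  have "lo k (Tz (-1) a) = i - 1"
  proof (rule lo_eq)
    have "Tz (- int (i - 1)) (Tz (-1) a) = p" unfolding ap using i(1) by (simp add: Tz_add of_nat_diff)
    then show "Tz (- int (i - 1)) (Tz (-1) a) \<in> L k" using i(4) L_Suc_sub unfolding p_def by auto
    show "\<forall>i'<i - 1. Tz (- int i') (Tz (-1) a) \<notin> L k"
    proof (intro allI impI)
      fix i' assume i': "i' < i - 1"
      have "Tz (- int i') (Tz (-1) a) = Tz (int (i - 1 - i')) p" unfolding ap using i'
        by (simp add: Tz_add of_nat_diff) (rule arg_cong[where f="\<lambda>z. Tz z p"]; simp)
      moreover have "0 < i - 1 - i'" "i - 1 - i' < i" using i' by auto
      ultimately show "Tz (- int i') (Tz (-1) a) \<notin> L k" using hp by metis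
    qed
  qed
  then have "lep k (Tz (-1) a) = p" unfolding lep_def ap using i(1) by (simp add: Tz_add of_nat_diff)
  then show ?thesis unfolding p_def a_def by simp
qed

lemma lep_det: assumes "w1 \<in> Xh" "w2 \<in> Xh" "lep k w1 = lep k w2" shows "lep (Suc k) w1 = lep (Suc k) w2"
proof (cases "lep k w1 \<in> S k")
  case True
  then show ?thesis using lep_Suc_S[OF assms(1) True] lep_Suc_S[OF assms(2)] assms(3) by simp
next
  case False
  then show ?thesis using lep_stay'[OF assms(1) False] lep_stay'[OF assms(2)] assms(3) by simp
qed

end

context cons begin

lemma lep_self: assumes "w \<in> L k" shows "lep k w = w"
proof -
  have "lo k w = 0" by (rule lo_eq) (use assms in auto)
  then show ?thesis unfolding lep_def by simp
qed

lemma Phi_shift: assumes x: "x \<in> Xh"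
  shows "Phi x \<in> adic_dom" "Phi (T x) = adic_shift (Phi x)"
proof -
  have Tx: "T x \<in> Xh" using Xh_T[OF x] .
  have "\<exists>n. T x \<notin> L n" using rm_L[OF Tx] .
  from least_nat[OF this] obtain n where n: "T x \<notin> L n" "\<forall>n'<n. T x \<in> L n'" by blast
  have "n \<noteq> 0"
  proof
    assume "n = 0" then show False using n(1) L0 by simp
  qed
  then obtain k where k: "n = Suc k" by (cases n) auto
  have "T x \<in> S k" using n k unfolding S_def by simp
  then have "\<exists>k. LF (Phi x) k" using LF_at[OF x] by blast
  from least_nat[OF this] obtain j where j: "LF (Phi x) j" "\<forall>k<j. \<not> LF (Phi x) k" by blast
  have TL: "T x \<in> L k" if "k \<le> j" for k
    using that
  proof (induction k)
    case 0 then show ?case by (simp add: L0)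
  next
    case (Suc k)
    have "T x \<in> L k" using Suc by simp
    moreover have "T x \<notin> S k"
    proof
      assume "T x \<in> S k"
      then have "LF (Phi x) k" using LF_at[OF x] by blast
      then show False using j(2) Suc.prems by simp
    qed
    ultimately show ?case unfolding S_def by simp
  qed
  from j(1) obtain u v where uv: "fst (Phi x j) = Pair u v" "\<not> snd (Phi x j)" unfolding LF_def by blast
  have ns: "lep j x \<notin> S j" using uv(2) unfolding Phi_def by simp
  have lx: "lep (Suc j) x = lep j x" using lep_stay'[OF x ns] .
  have "nxt j (lep j x) \<in> S j"
  proof (rule ccontr)
    assume "nxt j (lep j x) \<notin> S j"
    then have "fst (Phi x j) = Cp (vert j (lep j x))" unfolding Phi_def lx by simp
    then show False using uv(1) by simp
  qed
  then have TS: "T x \<in> S j" using last_block(2)[OF x TL[of j]] by simp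
  have ltx: "lep (Suc j) (T x) = lep (Suc j) x"
  proof -
    have "lep j (T x) = T x" using lep_self TL by simp
    then have "lep (Suc j) (T x) = lep j (Tz (-1) (T x))" using lep_Suc_S[OF Tx] TS by simp
    also have "Tz (-1) (T x) = x" using Tz_add[of "-1" 1 x] by (simp add: Tz1)
    finally show ?thesis using lx by simp
  qed
  have above: "\<forall>k>j. Phi (T x) k = Phi x k"
  proof -
    have "lep k (T x) = lep k x" if "Suc j \<le> k" for k
      using that
    proof (induction k rule: dec_induct)
      case base then show ?case by (rule ltx)
    next
      case (step k) then show ?case using lep_det[OF Tx x] by simp
    qed
    then show ?thesis unfolding Phi_def by simp
  qed
  have qj: "Phi (T x) j = (Pair u v, True)"
  proof -
    have "lep j (T x) = T x" using lep_self TL by simp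
    then have "snd (Phi (T x) j)" unfolding Phi_def using TS by simp
    moreover have "fst (Phi (T x) j) = fst (Phi x j)" unfolding Phi_def using ltx by simp
    ultimately show ?thesis using uv(1) by (simp add: prod_eq_iff)
  qed
  have qbelow: "\<forall>k<j. \<not> snd (Phi (T x) k)"
  proof (intro allI impI)
    fix k assume "k < j"
    have "lep k (T x) = T x" using lep_self TL \<open>k < j\<close> by simp
    moreover have "T x \<in> L (Suc k)" using TL \<open>k < j\<close> by simp
    ultimately show "\<not> snd (Phi (T x) k)" unfolding Phi_def S_def by simp
  qed
  show "Phi x \<in> adic_dom" "Phi (T x) = adic_shift (Phi x)"
    using adic_succ[OF Phi_paths[OF x] Phi_paths[OF Tx] uv qj above j(2) qbelow] by auto
qed

end

instance uavert :: countable by countable_datatype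

lemma pair_meas_count:
  fixes f :: "'a \<Rightarrow> 'b::countable" and g :: "'a \<Rightarrow> 'c::countable"
  assumes f: "f \<in> measurable M (count_space UNIV)" and g: "g \<in> measurable M (count_space UNIV)"
  shows "(\<lambda>x. h (f x) (g x)) \<in> measurable M (count_space UNIV)"
proof -
  have "(\<lambda>x. (\<lambda>u x. h u (g x)) (f x) x) \<in> measurable M (count_space UNIV)"
  proof (rule measurable_compose_countable'[OF _ f])
    fix u
    have "(\<lambda>x. (\<lambda>v x. h u v) (g x) x) \<in> measurable M (count_space UNIV)"
      by (rule measurable_compose_countable'[OF _ g]) simp_all
    then show "(\<lambda>x. h u (g x)) \<in> measurable M (count_space UNIV)" by simp
  qed simp
  then show ?thesis by simp
qed

context cons begin

lemma lo_meas: "lo n \<in> measurable borel (count_space UNIV)"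
proof -
  have "(\<lambda>w. LEAST i. Tz (- int i) w \<in> L n) \<in> measurable borel (count_space UNIV)"
    by (rule measurable_Least) measurable
  then show ?thesis unfolding lo_def[abs_def] .
qed

lemma hi_meas: "hi n \<in> measurable borel (count_space UNIV)"
proof -
  have "(\<lambda>w. LEAST i. 0 < i \<and> Tz (int i) w \<in> L n) \<in> measurable borel (count_space UNIV)"
    by (rule measurable_Least) measurable
  then show ?thesis unfolding hi_def[abs_def] .
qed

lemma lep_meas: "lep n \<in> borel_measurable borel"
proof -
  have "(\<lambda>w. (\<lambda>i w. Tz (- int i) w) (lo n w) w) \<in> borel_measurable borel"
    by (rule measurable_compose_countable'[OF _ lo_meas]) auto
  then show ?thesis unfolding lep_def[abs_def] by simp
qed

lemma nxt_meas: "nxt n \<in> borel_measurable borel"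
proof -
  have "(\<lambda>w. (\<lambda>i w. Tz (int i) w) (hi n w) w) \<in> borel_measurable borel"
    by (rule measurable_compose_countable'[OF _ hi_meas]) auto
  then show ?thesis unfolding nxt_def[abs_def] by simp
qed

lemma vert_meas: "vert n \<in> measurable borel (count_space UNIV)"
proof (induction n)
  case 0 then show ?case by simp
next
  case (Suc n)
  have v2: "(\<lambda>a. vert n (nxt n a)) \<in> measurable borel (count_space UNIV)"
    using measurable_compose[OF nxt_meas Suc] by simp
  have p: "(\<lambda>a. Pair (vert n a) (vert n (nxt n a))) \<in> measurable borel (count_space UNIV)"
    by (rule pair_meas_count[OF Suc v2])
  have c: "(\<lambda>a. Cp (vert n a)) \<in> measurable borel (count_space UNIV)"
    using measurable_compose[OF Suc, of Cp "count_space UNIV"] by simp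
  have "nxt n -` S n \<in> sets borel" using measurable_sets[OF nxt_meas S_meas] by simp
  then have pr: "{a \<in> space borel. nxt n a \<in> S n} \<in> sets borel"
    by (simp add: vimage_def)
  have "(\<lambda>a. if nxt n a \<in> S n then Pair (vert n a) (vert n (nxt n a)) else Cp (vert n a))
      \<in> measurable borel (count_space UNIV)"
    by (rule measurable_If[OF p c pr])
  then show ?case by simp
qed

lemma Phi_coord_meas: "(\<lambda>w. Phi w k) \<in> measurable borel (count_space UNIV)"
proof -
  have v: "(\<lambda>w. vert (Suc k) (lep (Suc k) w)) \<in> measurable borel (count_space UNIV)"
    using measurable_compose[OF lep_meas[of "Suc k"] vert_meas[of "Suc k"]] by (simp del: vert.simps)
  have "lep k -` S k \<in> sets borel" using measurable_sets[OF lep_meas S_meas] by simp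
  then have b: "(\<lambda>w. lep k w \<in> S k) \<in> measurable borel (count_space UNIV)"
    unfolding pred_def by (simp add: vimage_def)
  show ?thesis unfolding Phi_def by (rule pair_meas_count[OF v b])
qed

lemma Phi_meas: "Phi \<in> measurable (restrict_space borel Xh) UA_path_space"
  unfolding UA_path_space_def
proof (rule measurable_restrict_space2)
  show "Phi \<in> space (restrict_space borel Xh) \<rightarrow> UA_paths"
    using Phi_paths by (auto simp: space_restrict_space)
  have "Phi \<in> measurable borel (PiM UNIV (\<lambda>_. count_space UNIV))"
    by (rule measurable_PiM_single') (auto simp: Phi_coord_meas)
  then show "Phi \<in> measurable (restrict_space borel Xh) (PiM UNIV (\<lambda>_. count_space UNIV))"
    by (rule measurable_restrict_space1)
qed

end

lemma sep_family:
  assumes "separable_space (euclidean :: 'a::metric_space topology)"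
  shows "\<exists>U::nat \<Rightarrow> 'a set. (\<forall>k. open (U k)) \<and> (\<forall>x y. x \<noteq> y \<longrightarrow> (\<exists>k. x \<in> U k \<and> y \<notin> U k))"
proof -
  obtain C :: "'a set" where C: "countable C" "closure C = UNIV"
    using assms unfolding separable_space_def by auto
  define U where "U k = ball (from_nat_into C (fst (prod_decode k))) (1 / real (Suc (snd (prod_decode k))))" for k
  have "\<forall>k. open (U k)" unfolding U_def by simp
  moreover have "\<exists>k. x \<in> U k \<and> y \<notin> U k" if xy: "x \<noteq> y" for x y
  proof -
    define \<delta> where "\<delta> = dist x y"
    have d: "0 < \<delta>" unfolding \<delta>_def using xy by simp
    obtain m :: nat where m: "1 / real (Suc m) < \<delta> / 3"
    proof -
      obtain m :: nat where "3 / \<delta> < real m" using reals_Archimedean2 by blast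
      then have "3 / \<delta> < real (Suc m)" by simp
      then have "1 / real (Suc m) < \<delta> / 3" using d by (simp add: field_simps)
      then show ?thesis using that by blast
    qed
    define r where "r = 1 / real (Suc m)"
    have r: "0 < r" "r < \<delta> / 3" unfolding r_def using m by auto
    have "x \<in> closure C" using C(2) by simp
    then obtain c where c: "c \<in> C" "dist c x < r" using closure_approachable r(1) by blast
    obtain i where i: "from_nat_into C i = c" using from_nat_into_surj[OF C(1) c(1)] by blast
    define k where "k = prod_encode (i, m)"
    have Uk: "U k = ball c r" unfolding U_def k_def r_def using i by simp
    have "x \<in> U k" unfolding Uk using c(2) by (simp add: dist_commute)
    moreover have "y \<notin> U k"
    proof
      assume "y \<in> U k"
      then have "dist c y < r" unfolding Uk by simp
      moreover have "dist x y \<le> dist c x + dist c y" by (rule dist_triangle3)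
      ultimately show False using c(2) r unfolding \<delta>_def by linarith
    qed
    ultimately show ?thesis by blast
  qed
  ultimately show ?thesis by blast
qed

theorem theorem1:
  fixes T :: "'a::metric_space \<Rightarrow> 'a"
  assumes "separable_space (euclidean :: 'a topology)"
    and "borel_automorphism T"
    and "aperiodic T"
  shows "\<exists>Xh \<Phi>. metrically_universal T Xh
           \<and> \<Phi> \<in> measurable (restrict_space borel Xh) UA_path_space
           \<and> inj_on \<Phi> Xh
           \<and> (\<forall>x\<in>Xh. T x \<in> Xh \<and> \<Phi> x \<in> adic_dom \<and> \<Phi> (T x) = adic_shift (\<Phi> x))"
proof -
  obtain U :: "nat \<Rightarrow> 'a set" where U: "\<forall>k. open (U k)" "\<forall>x y. x \<noteq> y \<longrightarrow> (\<exists>k. x \<in> U k \<and> y \<notin> U k)"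
    using sep_family[OF assms(1)] by blast
  have ba: "bij T" "T \<in> borel_measurable borel" "inv T \<in> borel_measurable borel"
    using assms(2) unfolding borel_automorphism_def by auto
  have ap: "(T ^^ n) x \<noteq> x" if "n > 0" for x n
  proof
    assume "(T ^^ n) x = x"
    then have "x \<in> periodic_points T" unfolding periodic_points_def using that by blast
    then show False using assms(3) unfolding aperiodic_def by simp
  qed
  interpret c: cons T U
  proof
    show "\<And>k. U k \<in> sets borel" using U(1) by simp
    show "\<And>x y. x \<noteq> y \<Longrightarrow> \<exists>k. x \<in> U k \<and> y \<notin> U k" using U(2) by blast
  next
    fix x and n :: nat assume "0 < n" then show "(T ^^ n) x \<noteq> x" by (rule ap)
  qed (use ba in auto)
  show ?thesis
  proof (intro exI conjI)
    show "metrically_universal T c.Xh" by (rule c.Xh_univ)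
    show "c.Phi \<in> measurable (restrict_space borel c.Xh) UA_path_space" by (rule c.Phi_meas)
    show "inj_on c.Phi c.Xh" using c.Phi_inj by (auto intro: inj_onI)
    show "\<forall>x\<in>c.Xh. T x \<in> c.Xh \<and> c.Phi x \<in> adic_dom \<and> c.Phi (T x) = adic_shift (c.Phi x)"
      using c.Xh_T c.Phi_shift by blast
  qed
qed

end
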